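(* Let $\ell\in\{\ell_{lin},\ell_{log}\}$, suppose $[X\ Z]$ is $s$-regular ($s=s_1+s_2$), and let $\beta^*$ be the limit of the sequence $\{\beta^k\}$ generated by GPNA, with $\{u^k\}$ the associated projected-gradient points. Then for all sufficiently large $k$: (1) for $j=1,2$: if $\|\beta_j^*\|_0<s_j$ then $\Gamma(\beta_j^* )\subseteq\Gamma(\beta_j^k)\cap\Gamma(u_j^k)$, and if $\|\beta_j^*\|_0=s_j$ then $\Gamma(\beta_j^* )=\Gamma(\beta_j^k)=\Gamma(u_j^k)$; (2) if the parameter $\sigma$ of GPNA satisfies $\sigma\in(0,l_f/2)$, then the Newton step is accepted at iteration $k$, i.e. one of the conditions (C1)–(C4) holds, the Newton system has a solution $v^k$, it satisfies $f(v^k)\le f(u^k)-\frac\sigma2\|v^k-u^k\|^2$, and hence $\beta^{k+1}=v^k$.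
   Context: Data: $X\in\mathbb{R}^{n\times p_1}$, $Z\in\mathbb{R}^{n\times p_2}$ with rows $x_i,z_i$; $y\in\mathbb{R}^n$ ($y\in\{0,1\}^n$ for $\ell_{log}$); $a,b,c>0$; integers $1\le s_j\le p_j$. Losses $\ell_{lin}(\beta;X,y)=\frac12\sum_i(y_i-\langle x_i,\beta\rangle)^2$, $\ell_{log}(\beta;X,y)=\sum_i(\log(1+\exp\langle x_i,\beta\rangle)-y_i\langle x_i,\beta\rangle)$. Objective $f(\beta)=\frac1n[a\ell(\beta_1;X,y)+b\ell(\beta_2;Z,y)+\frac c2\|X\beta_1-Z\beta_2\|^2]$, $\beta=(\beta_1;\beta_2)$. A matrix is $s$-regular if any $s$ of its columns are linearly independent. $\Sigma_j=\{v\in\mathbb{R}^{p_j}:\|v\|_0\le s_j\}$, $\Sigma=\{\beta:\beta_j\in\Sigma_j\}$; $\Pi_{\Sigma_j}(w)=\arg\min_{u\in\Sigma_j}\|w-u\|$ (set-valued); $\nabla_jf$ is the gradient in $\beta_j$; $\Gamma(v)$ is the support. Constant $l_f$: for $\ell_{log}$, $l_f=\min_{|T|\le s}\lambda_{\min}\big(\frac cn\begin{bmatrix}X^\top X&-X^\top Z\\-Z^\top X&Z^\top Z\end{bmatrix}_{TT}\big)$; for $\ell_{lin}$, $l_f=\min_{|T|\le s}\lambda_{\min}(Q_{TT})$ with $Q=\frac1n\begin{bmatrix}(a+c)X^\top X&-cX^\top Z\\-cZ^\top X&(b+c)Z^\top Z\end{bmatrix}$; minima over $T\subseteq[p_1+p_2]$.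 GPNA (run without stopping): parameters $\sigma>0$, $\epsilon>0$, $\alpha_0\in(0,1]$, $\gamma\in(0,1)$, start $\beta^0\in\Sigma$. At iteration $k$, for $\alpha>0$ let $\beta^k(\alpha)=(\beta_1^k(\alpha);\beta_2^k(\alpha))$, $\beta_j^k(\alpha)\in\Pi_{\Sigma_j}(\beta_j^k-\alpha\nabla_jf(\beta^k))$. Let $q_k$ be the smallest nonnegative integer with $f(\beta^k(\alpha_0\gamma^{q_k}))\le f(\beta^k)-\frac\sigma2\|\beta^k(\alpha_0\gamma^{q_k})-\beta^k\|^2$; $\alpha_k=\alpha_0\gamma^{q_k}$, $u^k=\beta^k(\alpha_k)$, $\Gamma_k=\Gamma(u^k)$, $H^k=\nabla^2f(u^k)$, tentatively $\beta^{k+1}=u^k$. If one of (C1) $\Gamma(\beta_1^k)=\Gamma(u_1^k)$ and $\Gamma(\beta_2^k)=\Gamma(u_2^k)$; (C2) $\|\nabla_1f(u^k)\|<\epsilon$ and $\Gamma(\beta_2^k)=\Gamma(u_2^k)$; (C3) $\|\nabla_2f(u^k)\|<\epsilon$ and $\Gamma(\beta_1^k)=\Gamma(u_1^k)$; (C4) $\|\nabla_1f(u^k)\|<\epsilon$ and $\|\nabla_2f(u^k)\|<\epsilon$ holds, and the Newton system $(H^k)_{\Gamma_k\Gamma_k}(v_{\Gamma_k}-u^k_{\Gamma_k})=-(\nabla f(u^k))_{\Gamma_k}$, $v_{\overline{\Gamma}_k}=0$ has a solution $v^k$ with $f(v^k)\le f(u^k)-\frac\sigma2\|v^k-u^k\|^2$,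 then set $\beta^{k+1}=v^k$ instead. *)

theory Defs
  imports "HOL-Analysis.Analysis"
begin

datatype loss_kind = Lin | Log

text \<open>Observations indexed by the finite type 'n (n = CARD('n)); X is n x p1 (p1 = CARD('p1)),
  Z is n x p2.  A parameter vector is a pair (beta1, beta2).\<close>

definition loss :: "loss_kind \<Rightarrow> real^'p \<Rightarrow> real^'p^'n \<Rightarrow> real^'n \<Rightarrow> real" where
  "loss L bt A y = (case L of
      Lin \<Rightarrow> (1/2) * (\<Sum>i\<in>UNIV. (y$i - (A *v bt)$i)^2)
    | Log \<Rightarrow> (\<Sum>i\<in>UNIV. ln (1 + exp ((A *v bt)$i)) - y$i * (A *v bt)$i))"

definition fobj :: "loss_kind \<Rightarrow> real \<Rightarrow> real \<Rightarrow> real \<Rightarrow> real^'p1^'n \<Rightarrow> real^'p2^'n \<Rightarrow> real^'n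
    \<Rightarrow> (real^'p1) \<times> (real^'p2) \<Rightarrow> real" where
  "fobj L a b c X Z y bt = (1 / real CARD('n)) *
     (a * loss L (fst bt) X y + b * loss L (snd bt) Z y
      + (c/2) * (norm (X *v fst bt - Z *v snd bt))^2)"

definition gradient :: "('a::real_inner \<Rightarrow> real) \<Rightarrow> 'a \<Rightarrow> 'a" where
  "gradient F x = (THE g. (F has_derivative (\<lambda>h. g \<bullet> h)) (at x))"

definition hessian :: "('a::real_inner \<Rightarrow> real) \<Rightarrow> 'a \<Rightarrow> 'a \<Rightarrow> 'a" where
  "hessian F x = (THE H. (gradient F has_derivative H) (at x))"

definition supp :: "real^'p \<Rightarrow> 'p set" where
  "supp v = {i. v$i \<noteq> 0}"

definition l0 :: "real^'p \<Rightarrow> nat" where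
  "l0 v = card (supp v)"

text \<open>Coordinates of a stacked vector (beta1; beta2), indexed by 'p1 + 'p2.\<close>
fun comp :: "(real^'p1) \<times> (real^'p2) \<Rightarrow> 'p1 + 'p2 \<Rightarrow> real" where
  "comp w (Inl i) = fst w $ i"
| "comp w (Inr j) = snd w $ j"

definition suppP :: "(real^'p1) \<times> (real^'p2) \<Rightarrow> ('p1 + 'p2) set" where
  "suppP w = {t. comp w t \<noteq> 0}"

definition SparseSet :: "nat \<Rightarrow> (real^'p) set" where
  "SparseSet s = {v. l0 v \<le> s}"

definition proj_sparse :: "nat \<Rightarrow> real^'p \<Rightarrow> (real^'p) set" where
  "proj_sparse s w = {u \<in> SparseSet s. \<forall>u'\<in>SparseSet s. norm (w - u) \<le> norm (w - u')}"

definition cols :: "real^'p1^'n \<Rightarrow> real^'p2^'n \<Rightarrow> 'p1 + 'p2 \<Rightarrow> real^'n" where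
  "cols X Z t = (case t of Inl i \<Rightarrow> column i X | Inr j \<Rightarrow> column j Z)"

definition s_regular :: "nat \<Rightarrow> ('k::finite \<Rightarrow> real^'n) \<Rightarrow> bool" where
  "s_regular s col \<longleftrightarrow> (\<forall>T. card T = s \<longrightarrow>
      (\<forall>w. (\<Sum>t\<in>T. w t *\<^sub>R col t) = 0 \<longrightarrow> (\<forall>t\<in>T. w t = 0)))"

definition gram :: "real^'p^'n \<Rightarrow> real^'q^'n \<Rightarrow> 'p \<Rightarrow> 'q \<Rightarrow> real" where
  "gram A B i j = (\<Sum>r\<in>UNIV. A$r$i * B$r$j)"

fun blk :: "('a \<Rightarrow> 'a \<Rightarrow> real) \<Rightarrow> ('a \<Rightarrow> 'b \<Rightarrow> real) \<Rightarrow> ('b \<Rightarrow> 'a \<Rightarrow> real) \<Rightarrow> ('b \<Rightarrow> 'b \<Rightarrow> real)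
    \<Rightarrow> 'a + 'b \<Rightarrow> 'a + 'b \<Rightarrow> real" where
  "blk A B C D (Inl i) (Inl j) = A i j"
| "blk A B C D (Inl i) (Inr j) = B i j"
| "blk A B C D (Inr i) (Inl j) = C i j"
| "blk A B C D (Inr i) (Inr j) = D i j"

definition eig_sub :: "('k \<Rightarrow> 'k \<Rightarrow> real) \<Rightarrow> 'k set \<Rightarrow> real \<Rightarrow> bool" where
  "eig_sub M T lam \<longleftrightarrow> (\<exists>x::'k \<Rightarrow> real. (\<exists>i\<in>T. x i \<noteq> 0) \<and> (\<forall>i. i \<notin> T \<longrightarrow> x i = 0) \<and>
      (\<forall>i\<in>T. (\<Sum>j\<in>T. M i j * x j) = lam * x i))"

definition min_sub_eig :: "nat \<Rightarrow> ('k \<Rightarrow> 'k \<Rightarrow> real) \<Rightarrow> real" where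
  "min_sub_eig s M = Min {lam. \<exists>T. card T \<le> s \<and> eig_sub M T lam}"

definition lf_matrix :: "loss_kind \<Rightarrow> real \<Rightarrow> real \<Rightarrow> real \<Rightarrow> real^'p1^'n \<Rightarrow> real^'p2^'n
    \<Rightarrow> 'p1 + 'p2 \<Rightarrow> 'p1 + 'p2 \<Rightarrow> real" where
  "lf_matrix L a b c X Z = (let n = real CARD('n) in case L of
     Log \<Rightarrow> blk (\<lambda>i j. c/n * gram X X i j) (\<lambda>i j. - c/n * gram X Z i j)
                (\<lambda>i j. - c/n * gram Z X i j) (\<lambda>i j. c/n * gram Z Z i j)
   | Lin \<Rightarrow> blk (\<lambda>i j. (a+c)/n * gram X X i j) (\<lambda>i j. - c/n * gram X Z i j)
                (\<lambda>i j. - c/n * gram Z X i j) (\<lambda>i j. (b+c)/n * gram Z Z i j))"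

definition l_f :: "loss_kind \<Rightarrow> real \<Rightarrow> real \<Rightarrow> real \<Rightarrow> real^'p1^'n \<Rightarrow> real^'p2^'n \<Rightarrow> nat \<Rightarrow> real" where
  "l_f L a b c X Z s = min_sub_eig s (lf_matrix L a b c X Z)"

definition newton_sol :: "((real^'p1) \<times> (real^'p2) \<Rightarrow> real) \<Rightarrow> (real^'p1) \<times> (real^'p2)
    \<Rightarrow> (real^'p1) \<times> (real^'p2) \<Rightarrow> bool" where
  "newton_sol F u v \<longleftrightarrow> (\<forall>t. t \<notin> suppP u \<longrightarrow> comp v t = 0) \<and>
     (\<forall>t\<in>suppP u. comp (hessian F u (v - u)) t = - comp (gradient F u) t)"

definition switch_cond :: "((real^'p1) \<times> (real^'p2) \<Rightarrow> real) \<Rightarrow> real \<Rightarrow> (real^'p1) \<times> (real^'p2)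
    \<Rightarrow> (real^'p1) \<times> (real^'p2) \<Rightarrow> bool" where
  "switch_cond F \<epsilon> bk uk \<longleftrightarrow>
     (supp (fst bk) = supp (fst uk) \<and> supp (snd bk) = supp (snd uk))
   \<or> (norm (fst (gradient F uk)) < \<epsilon> \<and> supp (snd bk) = supp (snd uk))
   \<or> (norm (snd (gradient F uk)) < \<epsilon> \<and> supp (fst bk) = supp (fst uk))
   \<or> (norm (fst (gradient F uk)) < \<epsilon> \<and> norm (snd (gradient F uk)) < \<epsilon>)"

text \<open>(beta, u, q, P, v) is a run of GPNA (without stopping) for objective F with sparsity
  levels s1, s2.  P k alpha is the chosen projected point beta^k(alpha); q k is the line-search
  exponent; u k = beta^k(alpha_k); v k is the accepted Newton point when the Newton step is taken.\<close>
definition gpna_run :: "((real^'p1) \<times> (real^'p2) \<Rightarrow> real) \<Rightarrow> nat \<Rightarrow> nat \<Rightarrow> real \<Rightarrow> real \<Rightarrow> real \<Rightarrow> real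
    \<Rightarrow> (nat \<Rightarrow> (real^'p1) \<times> (real^'p2)) \<Rightarrow> (nat \<Rightarrow> (real^'p1) \<times> (real^'p2)) \<Rightarrow> (nat \<Rightarrow> nat)
    \<Rightarrow> (nat \<Rightarrow> real \<Rightarrow> (real^'p1) \<times> (real^'p2)) \<Rightarrow> (nat \<Rightarrow> (real^'p1) \<times> (real^'p2)) \<Rightarrow> bool" where
  "gpna_run F s1 s2 \<sigma> \<epsilon> \<alpha>0 \<gamma> \<beta> u q P v \<longleftrightarrow>
     fst (\<beta> 0) \<in> SparseSet s1 \<and> snd (\<beta> 0) \<in> SparseSet s2 \<and>
     (\<forall>k. \<forall>\<alpha>>0.
        fst (P k \<alpha>) \<in> proj_sparse s1 (fst (\<beta> k) - \<alpha> *\<^sub>R fst (gradient F (\<beta> k))) \<and>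
        snd (P k \<alpha>) \<in> proj_sparse s2 (snd (\<beta> k) - \<alpha> *\<^sub>R snd (gradient F (\<beta> k)))) \<and>
     (\<forall>k. F (P k (\<alpha>0 * \<gamma> ^ q k)) \<le> F (\<beta> k) - \<sigma>/2 * (norm (P k (\<alpha>0 * \<gamma> ^ q k) - \<beta> k))^2 \<and>
          (\<forall>q'<q k. \<not> (F (P k (\<alpha>0 * \<gamma> ^ q')) \<le> F (\<beta> k) - \<sigma>/2 * (norm (P k (\<alpha>0 * \<gamma> ^ q') - \<beta> k))^2))) \<and>
     (\<forall>k. u k = P k (\<alpha>0 * \<gamma> ^ q k)) \<and>
     (\<forall>k. if switch_cond F \<epsilon> (\<beta> k) (u k) \<and>
             (\<exists>w. newton_sol F (u k) w \<and> F w \<le> F (u k) - \<sigma>/2 * (norm (w - u k))^2)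
          then newton_sol F (u k) (v k) \<and> F (v k) \<le> F (u k) - \<sigma>/2 * (norm (v k - u k))^2
               \<and> \<beta> (Suc k) = v k
          else \<beta> (Suc k) = u k)"

end

theory Submission
  imports Defs
begin


definition psi :: "loss_kind \<Rightarrow> real \<Rightarrow> real \<Rightarrow> real" where
  "psi L yi t = (case L of Lin \<Rightarrow> (yi - t)^2 / 2 | Log \<Rightarrow> ln (1 + exp t) - yi * t)"
definition psi1 :: "loss_kind \<Rightarrow> real \<Rightarrow> real \<Rightarrow> real" where
  "psi1 L yi t = (case L of Lin \<Rightarrow> t - yi | Log \<Rightarrow> exp t / (1 + exp t) - yi)"
definition psi2 :: "loss_kind \<Rightarrow> real \<Rightarrow> real" where
  "psi2 L t = (case L of Lin \<Rightarrow> 1 | Log \<Rightarrow> exp t / (1 + exp t)^2)"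
definition psi3 :: "loss_kind \<Rightarrow> real \<Rightarrow> real" where
  "psi3 L t = (case L of Lin \<Rightarrow> 0 | Log \<Rightarrow> exp t * (1 - exp t) / (1 + exp t)^3)"

lemma psi_deriv: "(psi L yi has_real_derivative psi1 L yi t) (at t)"
proof (cases L)
  case Lin then show ?thesis unfolding psi_def psi1_def
    by (auto intro!: derivative_eq_intros simp: field_simps)
next
  case Log
  have p: "1 + exp t > 0" by (metis add_pos_pos exp_gt_zero zero_less_one)
  show ?thesis using Log p unfolding psi_def psi1_def
    by (auto intro!: derivative_eq_intros simp: field_simps)
qed

lemma psi1_deriv: "(psi1 L yi has_real_derivative psi2 L t) (at t)"
proof (cases L)
  case Lin then show ?thesis unfolding psi2_def psi1_def
    by (auto intro!: derivative_eq_intros simp: field_simps)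
next
  case Log
  have p: "1 + exp t > 0" by (metis add_pos_pos exp_gt_zero zero_less_one)
  show ?thesis using Log p unfolding psi2_def psi1_def
    by (auto intro!: derivative_eq_intros simp: field_simps power2_eq_square)
qed

lemma psi2_deriv: "(psi2 L has_real_derivative psi3 L t) (at t)"
proof (cases L)
  case Lin then show ?thesis unfolding psi2_def psi3_def
    by (auto intro!: derivative_eq_intros simp: field_simps)
next
  case Log
  have p: "1 + exp t > 0" by (metis add_pos_pos exp_gt_zero zero_less_one)
  have e: "exp t > 0" by simp
  have eq: "(exp t * (1 + exp t)^2 - exp t * (2 * (1 + exp t) * exp t)) / ((1 + exp t)^2)^2
      = exp t * (1 - exp t) / (1 + exp t)^3"
  proof -
    have d1: "((1 + exp t)^2)^2 \<noteq> 0" "(1 + exp t)^3 \<noteq> 0" using p by auto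
    have pe: "(exp t * (1 + exp t)^2 - exp t * (2 * (1 + exp t) * exp t)) * (1 + exp t)^3
       = exp t * (1 - exp t) * ((1 + exp t)^2)^2" by algebra
    show ?thesis using frac_eq_eq[OF d1] pe by simp
  qed
  have "((\<lambda>t. exp t / (1 + exp t)^2) has_real_derivative
     (exp t * (1 + exp t)^2 - exp t * (2 * (1 + exp t) * exp t)) / ((1 + exp t)^2)^2) (at t)"
    using p by (auto intro!: derivative_eq_intros simp: power2_eq_square)
  then show ?thesis using Log eq unfolding psi2_def psi3_def by simp
qed

lemma psi2_nonneg: "psi2 L t \<ge> 0"
  by (cases L) (auto simp: psi2_def)

lemma psi2_le1: "psi2 L t \<le> 1"
proof (cases L)
  case Log
  have "exp t \<le> (1 + exp t)^2" by (simp add: power2_eq_square algebra_simps add_pos_pos)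
  moreover have "(1 + exp t)^2 > 0" by (metis add_pos_pos exp_gt_zero zero_less_one zero_less_power)
  ultimately show ?thesis using Log by (simp add: psi2_def divide_le_eq)
qed (simp add: psi2_def)

lemma psi3_bound: "\<bar>psi3 L t\<bar> \<le> 1"
proof (cases L)
  case Log
  let ?e = "exp t"
  have e: "?e > 0" by simp
  have "\<bar>1 - ?e\<bar> \<le> 1 + ?e" using e by (simp add: abs_le_iff)
  then have "\<bar>?e * (1 - ?e)\<bar> \<le> ?e * (1 + ?e)" using e by (simp add: abs_mult)
  also have "\<dots> \<le> (1 + ?e)^3" using e by (simp add: power3_eq_cube algebra_simps add_pos_pos)
  finally have "\<bar>?e * (1 - ?e)\<bar> \<le> (1 + ?e)^3" .
  moreover have "(1 + ?e)^3 > 0" by (metis add_pos_pos exp_gt_zero zero_less_one zero_less_power)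
  ultimately show ?thesis using Log by (simp add: psi3_def abs_divide)
qed (simp add: psi3_def)

lemma shift_deriv: "(f has_real_derivative D) (at (t + x)) \<Longrightarrow> ((\<lambda>x. f (t + x)) has_real_derivative D) (at x)"
  using DERIV_shift[of f D x t] by (simp add: add.commute)

lemma psi_taylor2: "psi L yi (t + h) \<le> psi L yi t + psi1 L yi t * h + h^2/2"
proof -
  define D where "D = (\<lambda>m::nat. if m = 0 then (\<lambda>x. psi L yi (t + x)) else
        if m = 1 then (\<lambda>x. psi1 L yi (t + x)) else (\<lambda>x. psi2 L (t + x)))"
  have "\<forall>m x. m < 2 \<and> \<bar>x\<bar> \<le> \<bar>h\<bar> \<longrightarrow> (D m has_real_derivative D (Suc m) x) (at x)"
  proof (intro allI impI)
    fix m :: nat and x assume "m < 2 \<and> \<bar>x\<bar> \<le> \<bar>h\<bar>"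
    then have "m = 0 \<or> m = 1" by auto
    then show "(D m has_real_derivative D (Suc m) x) (at x)"
    proof
      assume "m = 0" then show ?thesis unfolding D_def
        using shift_deriv[OF psi_deriv[of L yi "t+x"]] by simp
    next
      assume "m = 1" then show ?thesis unfolding D_def
        using shift_deriv[OF psi1_deriv[of L yi "t+x"]] by simp
    qed
  qed
  from Maclaurin_bi_le[of D "\<lambda>x. psi L yi (t + x)" 2 h, OF _ this]
  obtain x where "psi L yi (t + h) = (\<Sum>m<2. D m 0 / fact m * h ^ m) + D 2 x / fact 2 * h ^ 2"
    by (auto simp: D_def)
  then have "psi L yi (t + h) = psi L yi t + psi1 L yi t * h + psi2 L (t + x) / 2 * h^2"
    by (simp add: D_def eval_nat_numeral)
  moreover have "psi2 L (t + x) / 2 * h^2 \<le> h^2/2"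
    using psi2_le1[of L "t+x"] psi2_nonneg[of L "t+x"] mult_left_le_one_le[of "h^2" "psi2 L (t+x)"] by simp
  ultimately show ?thesis by linarith
qed

lemma psi_taylor3: "\<bar>psi L yi (t + h) - psi L yi t - psi1 L yi t * h - psi2 L t * h^2/2\<bar> \<le> \<bar>h\<bar>^3"
proof -
  define D where "D = (\<lambda>m::nat. if m = 0 then (\<lambda>x. psi L yi (t + x)) else
        if m = 1 then (\<lambda>x. psi1 L yi (t + x)) else if m = 2 then (\<lambda>x. psi2 L (t + x))
        else (\<lambda>x. psi3 L (t + x)))"
  have "\<forall>m x. m < 3 \<and> \<bar>x\<bar> \<le> \<bar>h\<bar> \<longrightarrow> (D m has_real_derivative D (Suc m) x) (at x)"
  proof (intro allI impI)
    fix m :: nat and x assume "m < 3 \<and> \<bar>x\<bar> \<le> \<bar>h\<bar>"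
    then have "m = 0 \<or> m = 1 \<or> m = 2" by auto
    then show "(D m has_real_derivative D (Suc m) x) (at x)"
    proof (elim disjE)
      assume "m = 0" then show ?thesis unfolding D_def
        using shift_deriv[OF psi_deriv[of L yi "t+x"]] by simp
    next
      assume "m = 1" then show ?thesis unfolding D_def
        using shift_deriv[OF psi1_deriv[of L yi "t+x"]] by simp
    next
      assume "m = 2" then show ?thesis unfolding D_def
        using shift_deriv[OF psi2_deriv[of L "t+x"]] by simp
    qed
  qed
  from Maclaurin_bi_le[of D "\<lambda>x. psi L yi (t + x)" 3 h, OF _ this]
  obtain x where "psi L yi (t + h) = (\<Sum>m<3. D m 0 / fact m * h ^ m) + D 3 x / fact 3 * h ^ 3"
    by (auto simp: D_def)
  then have "psi L yi (t + h) - psi L yi t - psi1 L yi t * h - psi2 L t * h^2/2 = psi3 L (t + x) / 6 * h^3"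
    by (simp add: D_def eval_nat_numeral fact_numeral)
  moreover have "\<bar>psi3 L (t + x) / 6 * h^3\<bar> \<le> \<bar>h\<bar>^3"
  proof -
    have "\<bar>psi3 L (t + x) / 6 * h^3\<bar> = \<bar>psi3 L (t + x)\<bar> / 6 * \<bar>h\<bar>^3" by (simp add: abs_mult power_abs)
    also have "\<dots> \<le> 1 * \<bar>h\<bar>^3" using psi3_bound[of L "t+x"]
      by (intro mult_right_mono) auto
    finally show ?thesis by simp
  qed
  ultimately show ?thesis by simp
qed



definition tmul :: "real^'p^'n \<Rightarrow> real^'n \<Rightarrow> real^'p" where
  "tmul A w = (\<Sum>i\<in>UNIV. w$i *\<^sub>R A$i)"

lemma mv_comp: "(A *v x) $ i = A$i \<bullet> x"
  by (simp add: matrix_vector_mult_def inner_vec_def)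

lemma tmul_inner: "tmul A w \<bullet> h = w \<bullet> (A *v h)"
  by (simp add: tmul_def inner_sum_left inner_vec_def[of w] mv_comp)

lemma loss_eq: "loss L bt A y = (\<Sum>i\<in>UNIV. psi L (y$i) ((A *v bt)$i))"
  by (cases L) (simp_all add: loss_def psi_def sum_divide_distrib)

lemma lin_fst: fixes A :: "real^'p^'n" shows
  "((\<lambda>x::(real^'p) \<times> ('a::real_normed_vector). (A *v fst x) $ i) has_derivative (\<lambda>h. (A *v fst h) $ i)) F"
proof -
  have "bounded_linear (\<lambda>x::(real^'p) \<times> ('a::real_normed_vector). A$i \<bullet> fst x)"
    by (intro bounded_linear_inner_right_comp bounded_linear_fst)
  then show ?thesis by (simp add: mv_comp bounded_linear_imp_has_derivative)
qed

lemma lin_snd: fixes A :: "real^'p^'n" shows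
  "((\<lambda>x::('a::real_normed_vector) \<times> (real^'p). (A *v snd x) $ i) has_derivative (\<lambda>h. (A *v snd h) $ i)) F"
proof -
  have "bounded_linear (\<lambda>x::('a::real_normed_vector) \<times> (real^'p). A$i \<bullet> snd x)"
    by (intro bounded_linear_inner_right_comp bounded_linear_snd)
  then show ?thesis by (simp add: mv_comp bounded_linear_imp_has_derivative)
qed

lemma psi_comp: "(g has_derivative g') (at x within s) \<Longrightarrow>
   ((\<lambda>x. psi L yi (g x)) has_derivative (\<lambda>h. g' h * psi1 L yi (g x))) (at x within s)"
  by (rule DERIV_compose_FDERIV[OF psi_deriv])

lemma psi1_comp: "(g has_derivative g') (at x within s) \<Longrightarrow>
   ((\<lambda>x. psi1 L yi (g x)) has_derivative (\<lambda>h. g' h * psi2 L (g x))) (at x within s)"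
  by (rule DERIV_compose_FDERIV[OF psi1_deriv])

definition Gfun :: "loss_kind \<Rightarrow> real \<Rightarrow> real \<Rightarrow> real \<Rightarrow> real^'p1^'n \<Rightarrow> real^'p2^'n \<Rightarrow> real^'n
    \<Rightarrow> (real^'p1) \<times> (real^'p2) \<Rightarrow> (real^'p1) \<times> (real^'p2)" where
  "Gfun L a b c X Z y x =
    ((1 / real CARD('n)) *\<^sub>R (a *\<^sub>R (\<Sum>i\<in>UNIV. psi1 L (y$i) ((X *v fst x)$i) *\<^sub>R X$i)
         + c *\<^sub>R (\<Sum>i\<in>UNIV. ((X *v fst x)$i - (Z *v snd x)$i) *\<^sub>R X$i)),
     (1 / real CARD('n)) *\<^sub>R (b *\<^sub>R (\<Sum>i\<in>UNIV. psi1 L (y$i) ((Z *v snd x)$i) *\<^sub>R Z$i)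
         - c *\<^sub>R (\<Sum>i\<in>UNIV. ((X *v fst x)$i - (Z *v snd x)$i) *\<^sub>R Z$i)))"

definition Hfun :: "loss_kind \<Rightarrow> real \<Rightarrow> real \<Rightarrow> real \<Rightarrow> real^'p1^'n \<Rightarrow> real^'p2^'n
    \<Rightarrow> (real^'p1) \<times> (real^'p2) \<Rightarrow> (real^'p1) \<times> (real^'p2) \<Rightarrow> (real^'p1) \<times> (real^'p2)" where
  "Hfun L a b c X Z x h =
    ((1 / real CARD('n)) *\<^sub>R (a *\<^sub>R (\<Sum>i\<in>UNIV. ((X *v fst h)$i * psi2 L ((X *v fst x)$i)) *\<^sub>R X$i)
         + c *\<^sub>R (\<Sum>i\<in>UNIV. ((X *v fst h)$i - (Z *v snd h)$i) *\<^sub>R X$i)),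
     (1 / real CARD('n)) *\<^sub>R (b *\<^sub>R (\<Sum>i\<in>UNIV. ((Z *v snd h)$i * psi2 L ((Z *v snd x)$i)) *\<^sub>R Z$i)
         - c *\<^sub>R (\<Sum>i\<in>UNIV. ((X *v fst h)$i - (Z *v snd h)$i) *\<^sub>R Z$i)))"

lemma sq_norm_vec: "(norm (v::real^'n))^2 = (\<Sum>i\<in>UNIV. (v$i)^2)"
  by (simp only: power2_norm_eq_inner) (simp add: inner_vec_def power2_eq_square)

lemma fobj_alt: fixes X :: "real^'p1^'n" and Z :: "real^'p2^'n" shows "fobj L a b c X Z y x = (1 / real CARD('n)) *
   (a * (\<Sum>i\<in>UNIV. psi L (y$i) ((X *v fst x)$i)) + b * (\<Sum>i\<in>UNIV. psi L (y$i) ((Z *v snd x)$i))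
    + (c/2) * (\<Sum>i\<in>UNIV. ((X *v fst x)$i - (Z *v snd x)$i)^2))"
  by (simp add: fobj_def loss_eq sq_norm_vec)

lemma fobj_deriv: fixes X :: "real^'p1^'n" and Z :: "real^'p2^'n" shows "(fobj L a b c X Z y has_derivative (\<lambda>h. Gfun L a b c X Z y x \<bullet> h)) (at x)"
proof -
  have "((\<lambda>x. (1 / real CARD('n)) *
   (a * (\<Sum>i\<in>UNIV. psi L (y$i) ((X *v fst x)$i)) + b * (\<Sum>i\<in>UNIV. psi L (y$i) ((Z *v snd x)$i))
    + (c/2) * (\<Sum>i\<in>UNIV. ((X *v fst x)$i - (Z *v snd x)$i)^2))) has_derivative
    (\<lambda>h. (1 / real CARD('n)) *
   (a * (\<Sum>i\<in>UNIV. (X *v fst h)$i * psi1 L (y$i) ((X *v fst x)$i)) + b * (\<Sum>i\<in>UNIV. (Z *v snd h)$i * psi1 L (y$i) ((Z *v snd x)$i))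
    + (c/2) * (\<Sum>i\<in>UNIV. 2 * (((X *v fst h)$i - (Z *v snd h)$i) * ((X *v fst x)$i - (Z *v snd x)$i)))))) (at x)"
    by (auto intro!: derivative_eq_intros psi_comp lin_fst lin_snd simp: power2_eq_square)
  moreover have "(\<lambda>h. (1 / real CARD('n)) *
   (a * (\<Sum>i\<in>UNIV. (X *v fst h)$i * psi1 L (y$i) ((X *v fst x)$i)) + b * (\<Sum>i\<in>UNIV. (Z *v snd h)$i * psi1 L (y$i) ((Z *v snd x)$i))
    + (c/2) * (\<Sum>i\<in>UNIV. 2 * (((X *v fst h)$i - (Z *v snd h)$i) * ((X *v fst x)$i - (Z *v snd x)$i)))))
     = (\<lambda>h. Gfun L a b c X Z y x \<bullet> h)"
  proof
    fix h
    show "(1 / real CARD('n)) *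
   (a * (\<Sum>i\<in>UNIV. (X *v fst h)$i * psi1 L (y$i) ((X *v fst x)$i)) + b * (\<Sum>i\<in>UNIV. (Z *v snd h)$i * psi1 L (y$i) ((Z *v snd x)$i))
    + (c/2) * (\<Sum>i\<in>UNIV. 2 * (((X *v fst h)$i - (Z *v snd h)$i) * ((X *v fst x)$i - (Z *v snd x)$i))))
     = Gfun L a b c X Z y x \<bullet> h"
      by (simp add: Gfun_def inner_prod_def inner_sum_left inner_diff_left mv_comp
          sum_distrib_left algebra_simps sum.distrib sum_subtractf)
  qed
  ultimately show ?thesis unfolding fobj_alt[abs_def] by simp
qed

lemma Gfun_deriv: fixes X :: "real^'p1^'n" and Z :: "real^'p2^'n" shows "(Gfun L a b c X Z y has_derivative Hfun L a b c X Z x) (at x)"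
  unfolding Gfun_def[abs_def] Hfun_def[abs_def]
  by (auto intro!: derivative_eq_intros psi1_comp lin_fst lin_snd)



lemma gradient_eq: fixes X :: "real^'p1^'n" and Z :: "real^'p2^'n" shows
  "gradient (fobj L a b c X Z y) x = Gfun L a b c X Z y x"
  unfolding gradient_def
proof (rule the_equality)
  show "(fobj L a b c X Z y has_derivative (\<lambda>h. Gfun L a b c X Z y x \<bullet> h)) (at x)" by (rule fobj_deriv)
next
  fix g assume "(fobj L a b c X Z y has_derivative (\<lambda>h. g \<bullet> h)) (at x)"
  from has_derivative_unique[OF this fobj_deriv]
  have "\<And>h. g \<bullet> h = Gfun L a b c X Z y x \<bullet> h" by metis
  then have "(g - Gfun L a b c X Z y x) \<bullet> (g - Gfun L a b c X Z y x) = 0"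
    by (simp add: inner_diff_left)
  then show "g = Gfun L a b c X Z y x" by simp
qed

lemma hessian_eq: fixes X :: "real^'p1^'n" and Z :: "real^'p2^'n" shows
  "hessian (fobj L a b c X Z y) x = Hfun L a b c X Z x"
proof -
  have ge: "gradient (fobj L a b c X Z y) = Gfun L a b c X Z y" by (rule ext) (rule gradient_eq)
  show ?thesis unfolding hessian_def ge
  proof (rule the_equality)
    show "(Gfun L a b c X Z y has_derivative Hfun L a b c X Z x) (at x)" by (rule Gfun_deriv)
  next
    fix H assume "(Gfun L a b c X Z y has_derivative H) (at x)"
    from has_derivative_unique[OF this Gfun_deriv] show "H = Hfun L a b c X Z x" .
  qed
qed

lemma sum_UNIV_plus: fixes f :: "'a::finite + 'b::finite \<Rightarrow> 'c::comm_monoid_add" shows "(\<Sum>t\<in>UNIV. f t) = (\<Sum>i\<in>UNIV. f (Inl i)) + (\<Sum>j\<in>UNIV. f (Inr j))"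
  by (subst UNIV_Plus_UNIV[symmetric], subst sum.Plus) (auto simp: o_def)

lemma sq_norm_pair: "(norm h)^2 = (norm (fst h))^2 + (norm (snd h))^2"
  by (cases h) (simp add: norm_Pair)

lemma sq_norm_comp: "(norm h)^2 = (\<Sum>t\<in>UNIV. (comp h t)^2)"
  by (simp add: sq_norm_pair sq_norm_vec sum_UNIV_plus)

lemma inner_comp: "g \<bullet> h = (\<Sum>t\<in>UNIV. comp g t * comp h t)"
  by (simp add: inner_prod_def inner_vec_def sum_UNIV_plus)

lemma Hquad: fixes X :: "real^'p1^'n" and Z :: "real^'p2^'n" shows
  "h \<bullet> Hfun L a b c X Z x h = (1 / real CARD('n)) *
     (a * (\<Sum>i\<in>UNIV. psi2 L ((X *v fst x)$i) * ((X *v fst h)$i)^2)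
    + b * (\<Sum>i\<in>UNIV. psi2 L ((Z *v snd x)$i) * ((Z *v snd h)$i)^2)
    + c * (\<Sum>i\<in>UNIV. ((X *v fst h)$i - (Z *v snd h)$i)^2))"
  by (simp add: Hfun_def inner_prod_def inner_sum_right inner_diff_right mv_comp inner_commute[of _ "fst h"]
       inner_commute[of _ "snd h"] sum_distrib_left algebra_simps sum.distrib sum_subtractf power2_eq_square)

definition Kc :: "real^'p1^'n \<Rightarrow> real^'p2^'n \<Rightarrow> real" where
  "Kc X Z = (\<Sum>i\<in>UNIV. norm (X$i)) + (\<Sum>i\<in>UNIV. norm (Z$i)) + 1"

lemma Kc_pos: "Kc X Z > 0"
proof -
  have "(\<Sum>i\<in>UNIV. norm (X$i)) \<ge> 0" "(\<Sum>i\<in>UNIV. norm (Z$i)) \<ge> 0" by (auto intro: sum_nonneg)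
  then show ?thesis unfolding Kc_def by linarith
qed

lemma compX_bound: "\<bar>(X *v fst h)$i\<bar> \<le> Kc X Z * norm h"
proof -
  have "\<bar>(X *v fst h)$i\<bar> \<le> norm (X$i) * norm (fst h)" unfolding mv_comp by (rule Cauchy_Schwarz_ineq2)
  also have "\<dots> \<le> Kc X Z * norm h"
  proof (rule mult_mono)
    have "norm (X$i) \<le> (\<Sum>i\<in>UNIV. norm (X$i))" by (rule member_le_sum) auto
    moreover have "(\<Sum>i\<in>UNIV. norm (Z$i)) \<ge> 0" by (auto intro: sum_nonneg)
    ultimately show "norm (X$i) \<le> Kc X Z" unfolding Kc_def by linarith
    show "norm (fst h) \<le> norm h" by (cases h) (simp add: norm_fst_le)
  qed (auto simp: Kc_pos less_imp_le)
  finally show ?thesis .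
qed

lemma compZ_bound: "\<bar>(Z *v snd h)$i\<bar> \<le> Kc X Z * norm h"
proof -
  have "\<bar>(Z *v snd h)$i\<bar> \<le> norm (Z$i) * norm (snd h)" unfolding mv_comp by (rule Cauchy_Schwarz_ineq2)
  also have "\<dots> \<le> Kc X Z * norm h"
  proof (rule mult_mono)
    have "norm (Z$i) \<le> (\<Sum>i\<in>UNIV. norm (Z$i))" by (rule member_le_sum) auto
    moreover have "(\<Sum>i\<in>UNIV. norm (X$i)) \<ge> 0" by (auto intro: sum_nonneg)
    ultimately show "norm (Z$i) \<le> Kc X Z" unfolding Kc_def by linarith
    show "norm (snd h) \<le> norm h" by (cases h) (simp add: norm_snd_le)
  qed (auto simp: Kc_pos less_imp_le)
  finally show ?thesis .
qed



lemma Ginner: fixes X :: "real^'p1^'n" and Z :: "real^'p2^'n" shows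
  "Gfun L a b c X Z y x \<bullet> h = (1 / real CARD('n)) *
   (a * (\<Sum>i\<in>UNIV. (X *v fst h)$i * psi1 L (y$i) ((X *v fst x)$i)) + b * (\<Sum>i\<in>UNIV. (Z *v snd h)$i * psi1 L (y$i) ((Z *v snd x)$i))
    + c * (\<Sum>i\<in>UNIV. ((X *v fst h)$i - (Z *v snd h)$i) * ((X *v fst x)$i - (Z *v snd x)$i)))"
  by (simp add: Gfun_def inner_prod_def inner_sum_left inner_diff_left mv_comp
          sum_distrib_left algebra_simps sum.distrib sum_subtractf)

lemma fobj_expand: fixes X :: "real^'p1^'n" and Z :: "real^'p2^'n" shows
  "fobj L a b c X Z y (x + h) - fobj L a b c X Z y x - Gfun L a b c X Z y x \<bullet> h =
   (1 / real CARD('n)) *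
   (a * (\<Sum>i\<in>UNIV. psi L (y$i) ((X *v fst x)$i + (X *v fst h)$i) - psi L (y$i) ((X *v fst x)$i)
          - psi1 L (y$i) ((X *v fst x)$i) * (X *v fst h)$i)
  + b * (\<Sum>i\<in>UNIV. psi L (y$i) ((Z *v snd x)$i + (Z *v snd h)$i) - psi L (y$i) ((Z *v snd x)$i)
          - psi1 L (y$i) ((Z *v snd x)$i) * (Z *v snd h)$i)
  + c/2 * (\<Sum>i\<in>UNIV. ((X *v fst h)$i - (Z *v snd h)$i)^2))"
  by (simp add: fobj_alt Ginner matrix_vector_right_distrib sum_subtractf sum.distrib
      algebra_simps power2_eq_square sum_distrib_left sum_divide_distrib diff_divide_distrib add_divide_distrib)

lemma sq_bound: "\<bar>s\<bar> \<le> B \<Longrightarrow> s^2 \<le> (B::real)^2"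
  by (metis abs_ge_zero order_trans power2_abs power_mono)

lemma cube_bound: "\<bar>s\<bar> \<le> B \<Longrightarrow> \<bar>s\<bar>^3 \<le> (B::real)^3"
  by (simp add: power_mono)

lemma fobj_descent: fixes X :: "real^'p1^'n" and Z :: "real^'p2^'n"
  assumes "a \<ge> 0" "b \<ge> 0" "c \<ge> 0"
  shows "fobj L a b c X Z y (x + h) \<le> fobj L a b c X Z y x + Gfun L a b c X Z y x \<bullet> h
          + ((a + b + 4*c) * (Kc X Z)^2) / 2 * (norm h)^2"
proof -
  let ?N = "real CARD('n)"
  let ?B = "Kc X Z * norm h"
  have N: "?N > 0" by simp
  have e1: "(\<Sum>i\<in>UNIV. psi L (y$i) ((X *v fst x)$i + (X *v fst h)$i) - psi L (y$i) ((X *v fst x)$i)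
          - psi1 L (y$i) ((X *v fst x)$i) * (X *v fst h)$i) \<le> (\<Sum>i\<in>(UNIV::'n set). ?B^2/2)"
  proof (rule sum_mono)
    fix i
    have "((X *v fst h)$i)^2 \<le> ?B^2" by (rule sq_bound[OF compX_bound])
    then show "psi L (y$i) ((X *v fst x)$i + (X *v fst h)$i) - psi L (y$i) ((X *v fst x)$i)
          - psi1 L (y$i) ((X *v fst x)$i) * (X *v fst h)$i \<le> ?B^2/2"
      using psi_taylor2[of L "y$i" "(X *v fst x)$i" "(X *v fst h)$i"] by linarith
  qed
  have e2: "(\<Sum>i\<in>UNIV. psi L (y$i) ((Z *v snd x)$i + (Z *v snd h)$i) - psi L (y$i) ((Z *v snd x)$i)
          - psi1 L (y$i) ((Z *v snd x)$i) * (Z *v snd h)$i) \<le> (\<Sum>i\<in>(UNIV::'n set). ?B^2/2)"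
  proof (rule sum_mono)
    fix i
    have "((Z *v snd h)$i)^2 \<le> ?B^2" by (rule sq_bound[OF compZ_bound])
    then show "psi L (y$i) ((Z *v snd x)$i + (Z *v snd h)$i) - psi L (y$i) ((Z *v snd x)$i)
          - psi1 L (y$i) ((Z *v snd x)$i) * (Z *v snd h)$i \<le> ?B^2/2"
      using psi_taylor2[of L "y$i" "(Z *v snd x)$i" "(Z *v snd h)$i"] by linarith
  qed
  have e3: "(\<Sum>i\<in>UNIV. ((X *v fst h)$i - (Z *v snd h)$i)^2) \<le> (\<Sum>i\<in>(UNIV::'n set). (2*?B)^2)"
  proof (rule sum_mono)
    fix i
    have "\<bar>(X *v fst h)$i - (Z *v snd h)$i\<bar> \<le> 2 * ?B"
      using compX_bound[of X h i Z] compZ_bound[of Z h i X] by linarith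
    then show "((X *v fst h)$i - (Z *v snd h)$i)^2 \<le> (2*?B)^2" by (rule sq_bound)
  qed
  have "a * (\<Sum>i\<in>UNIV. psi L (y$i) ((X *v fst x)$i + (X *v fst h)$i) - psi L (y$i) ((X *v fst x)$i)
          - psi1 L (y$i) ((X *v fst x)$i) * (X *v fst h)$i)
  + b * (\<Sum>i\<in>UNIV. psi L (y$i) ((Z *v snd x)$i + (Z *v snd h)$i) - psi L (y$i) ((Z *v snd x)$i)
          - psi1 L (y$i) ((Z *v snd x)$i) * (Z *v snd h)$i)
  + c/2 * (\<Sum>i\<in>UNIV. ((X *v fst h)$i - (Z *v snd h)$i)^2)
   \<le> a * (?N * (?B^2/2)) + b * (?N * (?B^2/2)) + c/2 * (?N * (2*?B)^2)"
    using e1 e2 e3 assms by (intro add_mono mult_left_mono) auto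
  also have "\<dots> = ?N * (((a + b + 4*c) * (Kc X Z)^2) / 2 * (norm h)^2)"
    by (simp add: algebra_simps power2_eq_square)
  finally have "(1/?N) * (a * (\<Sum>i\<in>UNIV. psi L (y$i) ((X *v fst x)$i + (X *v fst h)$i) - psi L (y$i) ((X *v fst x)$i)
          - psi1 L (y$i) ((X *v fst x)$i) * (X *v fst h)$i)
  + b * (\<Sum>i\<in>UNIV. psi L (y$i) ((Z *v snd x)$i + (Z *v snd h)$i) - psi L (y$i) ((Z *v snd x)$i)
          - psi1 L (y$i) ((Z *v snd x)$i) * (Z *v snd h)$i)
  + c/2 * (\<Sum>i\<in>UNIV. ((X *v fst h)$i - (Z *v snd h)$i)^2))
    \<le> ((a + b + 4*c) * (Kc X Z)^2) / 2 * (norm h)^2"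
    using N by (simp add: divide_le_eq mult.commute)
  then show ?thesis using fobj_expand[of L a b c X Z y x h] by linarith
qed

lemma fobj_remainder: fixes X :: "real^'p1^'n" and Z :: "real^'p2^'n"
  assumes "a \<ge> 0" "b \<ge> 0" "c \<ge> 0"
  shows "fobj L a b c X Z y (x + h) \<le> fobj L a b c X Z y x + Gfun L a b c X Z y x \<bullet> h
          + (1/2) * (h \<bullet> Hfun L a b c X Z x h) + (a + b) * (Kc X Z)^3 * (norm h)^3"
proof -
  let ?N = "real CARD('n)"
  let ?B = "Kc X Z * norm h"
  have N: "?N > 0" by simp
  have e1: "(\<Sum>i\<in>UNIV. psi L (y$i) ((X *v fst x)$i + (X *v fst h)$i) - psi L (y$i) ((X *v fst x)$i)
          - psi1 L (y$i) ((X *v fst x)$i) * (X *v fst h)$i - psi2 L ((X *v fst x)$i) * ((X *v fst h)$i)^2/2)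
       \<le> (\<Sum>i\<in>(UNIV::'n set). ?B^3)"
  proof (rule sum_mono)
    fix i
    have "\<bar>(X *v fst h)$i\<bar>^3 \<le> ?B^3" by (rule cube_bound[OF compX_bound])
    then show "psi L (y$i) ((X *v fst x)$i + (X *v fst h)$i) - psi L (y$i) ((X *v fst x)$i)
          - psi1 L (y$i) ((X *v fst x)$i) * (X *v fst h)$i - psi2 L ((X *v fst x)$i) * ((X *v fst h)$i)^2/2 \<le> ?B^3"
      using psi_taylor3[of L "y$i" "(X *v fst x)$i" "(X *v fst h)$i"] by linarith
  qed
  have e2: "(\<Sum>i\<in>UNIV. psi L (y$i) ((Z *v snd x)$i + (Z *v snd h)$i) - psi L (y$i) ((Z *v snd x)$i)
          - psi1 L (y$i) ((Z *v snd x)$i) * (Z *v snd h)$i - psi2 L ((Z *v snd x)$i) * ((Z *v snd h)$i)^2/2)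
       \<le> (\<Sum>i\<in>(UNIV::'n set). ?B^3)"
  proof (rule sum_mono)
    fix i
    have "\<bar>(Z *v snd h)$i\<bar>^3 \<le> ?B^3" by (rule cube_bound[OF compZ_bound])
    then show "psi L (y$i) ((Z *v snd x)$i + (Z *v snd h)$i) - psi L (y$i) ((Z *v snd x)$i)
          - psi1 L (y$i) ((Z *v snd x)$i) * (Z *v snd h)$i - psi2 L ((Z *v snd x)$i) * ((Z *v snd h)$i)^2/2 \<le> ?B^3"
      using psi_taylor3[of L "y$i" "(Z *v snd x)$i" "(Z *v snd h)$i"] by linarith
  qed
  have "fobj L a b c X Z y (x + h) - fobj L a b c X Z y x - Gfun L a b c X Z y x \<bullet> h
          - (1/2) * (h \<bullet> Hfun L a b c X Z x h) = (1/?N) *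
     (a * (\<Sum>i\<in>UNIV. psi L (y$i) ((X *v fst x)$i + (X *v fst h)$i) - psi L (y$i) ((X *v fst x)$i)
          - psi1 L (y$i) ((X *v fst x)$i) * (X *v fst h)$i - psi2 L ((X *v fst x)$i) * ((X *v fst h)$i)^2/2)
    + b * (\<Sum>i\<in>UNIV. psi L (y$i) ((Z *v snd x)$i + (Z *v snd h)$i) - psi L (y$i) ((Z *v snd x)$i)
          - psi1 L (y$i) ((Z *v snd x)$i) * (Z *v snd h)$i - psi2 L ((Z *v snd x)$i) * ((Z *v snd h)$i)^2/2))"
    unfolding diff_diff_eq2[symmetric] fobj_expand Hquad
    by (simp add: sum_subtractf algebra_simps sum_divide_distrib diff_divide_distrib add_divide_distrib sum.distrib)
       (simp add: sum_divide_distrib[symmetric])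
  also have "\<dots> \<le> (1/?N) * (a * (?N * ?B^3) + b * (?N * ?B^3))"
    using e1 e2 assms N by (intro mult_left_mono add_mono) auto
  also have "\<dots> = (a + b) * (Kc X Z)^3 * (norm h)^3" using N by (simp add: algebra_simps power_mult_distrib)
  finally show ?thesis by linarith
qed



definition qf :: "('k \<Rightarrow> 'k \<Rightarrow> real) \<Rightarrow> 'k set \<Rightarrow> ('k \<Rightarrow> real) \<Rightarrow> real" where
  "qf M T z = (\<Sum>s\<in>T. \<Sum>t\<in>T. M s t * z s * z t)"

definition symm :: "('k \<Rightarrow> 'k \<Rightarrow> real) \<Rightarrow> bool" where
  "symm M \<longleftrightarrow> (\<forall>s t. M s t = M t s)"

lemma qf_expand:
  assumes "symm M" "finite T"
  shows "qf M T (\<lambda>t. x t + \<tau> * w t) = qf M T x + 2 * \<tau> * (\<Sum>s\<in>T. w s * (\<Sum>t\<in>T. M s t * x t)) + \<tau>^2 * qf M T w"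
proof -
  have sw: "(\<Sum>s\<in>T. \<Sum>t\<in>T. M s t * x s * w t) = (\<Sum>s\<in>T. \<Sum>t\<in>T. M s t * w s * x t)"
    apply (subst sum.swap)
    using assms(1) unfolding symm_def by (simp add: algebra_simps)
  have "qf M T (\<lambda>t. x t + \<tau> * w t) = qf M T x + \<tau> * (\<Sum>s\<in>T. \<Sum>t\<in>T. M s t * x s * w t)
     + \<tau> * (\<Sum>s\<in>T. \<Sum>t\<in>T. M s t * w s * x t) + \<tau>^2 * qf M T w"
    unfolding qf_def by (simp add: algebra_simps sum.distrib sum_distrib_left power2_eq_square)
  also have "\<dots> = qf M T x + 2 * \<tau> * (\<Sum>s\<in>T. w s * (\<Sum>t\<in>T. M s t * x t)) + \<tau>^2 * qf M T w"
    unfolding sw by (simp add: algebra_simps sum_distrib_left)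
  finally show ?thesis .
qed

lemma quad_zero:
  fixes B C :: real
  assumes "B \<ge> 0" "\<And>\<tau>. 2 * \<tau> * C + \<tau>^2 * B \<ge> 0"
  shows "C = 0"
proof (rule ccontr)
  assume C: "C \<noteq> 0"
  define e where "e = 1 / (B + 1)"
  have e: "e > 0" "e * B < 1" using assms(1) by (auto simp: e_def field_simps)
  have "2 * (- e * C) * C + (- e * C)^2 * B = e * C^2 * (e * B - 2)"
    by (simp add: algebra_simps power2_eq_square)
  also have "\<dots> < 0" using e C by (intro mult_pos_neg) auto
  finally show False using assms(2)[of "- e * C"] by linarith
qed

lemma rayleigh_min:
  fixes M :: "'k::finite \<Rightarrow> 'k \<Rightarrow> real"
  assumes sym: "symm M" and T: "T \<noteq> {}"
  shows "\<exists>\<mu>. eig_sub M T \<mu> \<and> (\<forall>z. qf M T z \<ge> \<mu> * (\<Sum>t\<in>T. (z t)^2))"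
proof -
  have fT: "finite T" by simp
  define S where "S = {x::real^'k. (\<forall>t. t \<notin> T \<longrightarrow> x$t = 0) \<and> norm x = 1}"
  have nS: "\<And>x. x \<in> S \<Longrightarrow> (\<Sum>t\<in>T. (x$t)^2) = 1"
  proof -
    fix x assume x: "x \<in> S"
    have "(\<Sum>t\<in>T. (x$t)^2) = (\<Sum>t\<in>UNIV. (x$t)^2)"
      using x unfolding S_def by (intro sum.mono_neutral_left) auto
    also have "\<dots> = (norm x)^2" by (simp add: sq_norm_vec)
    finally show "(\<Sum>t\<in>T. (x$t)^2) = 1" using x unfolding S_def by simp
  qed
  have cS: "compact S"
  proof -
    have "S = (\<Inter>t\<in>-T. {x::real^'k. x$t = 0}) \<inter> {x. norm x = 1}" unfolding S_def by auto
    moreover have "closed \<dots>"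
      by (intro closed_Int closed_INT ballI closed_Collect_eq continuous_intros)
    moreover have "bounded S" unfolding S_def bounded_iff by auto
    ultimately show ?thesis using compact_eq_bounded_closed by metis
  qed
  obtain t0 where t0: "t0 \<in> T" using T by auto
  have neS: "S \<noteq> {}"
  proof -
    have "(axis t0 (1::real))$t = 0" if "t \<notin> T" for t using that t0 by (auto simp: axis_def)
    then have "axis t0 1 \<in> S" unfolding S_def by simp
    then show ?thesis by auto
  qed
  have cont: "continuous_on S (\<lambda>x::real^'k. qf M T (\<lambda>t. x$t))"
    unfolding qf_def by (intro continuous_intros)
  obtain x0 where x0: "x0 \<in> S" and mn: "\<And>x. x \<in> S \<Longrightarrow> qf M T (\<lambda>t. x0$t) \<le> qf M T (\<lambda>t. x$t)"
    using continuous_attains_inf[OF cS neS cont] by blast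
  define \<mu> where "\<mu> = qf M T (\<lambda>t. x0$t)"
  have lower: "qf M T z \<ge> \<mu> * (\<Sum>t\<in>T. (z t)^2)" for z
  proof (cases "(\<Sum>t\<in>T. (z t)^2) = 0")
    case True
    then have "\<forall>t\<in>T. z t = 0" using fT by (simp add: sum_nonneg_eq_0_iff)
    then have "qf M T z = 0" unfolding qf_def by simp
    then show ?thesis using True by simp
  next
    case False
    define r where "r = sqrt (\<Sum>t\<in>T. (z t)^2)"
    have "(\<Sum>t\<in>T. (z t)^2) \<ge> 0" by (intro sum_nonneg) auto
    then have r: "r > 0" "r^2 = (\<Sum>t\<in>T. (z t)^2)" using False unfolding r_def by auto
    define x where "x = (\<chi> t. if t \<in> T then z t / r else 0)"
    have "(norm x)^2 = (\<Sum>t\<in>UNIV. (x$t)^2)" by (simp add: sq_norm_vec)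
    also have "\<dots> = (\<Sum>t\<in>T. (x$t)^2)" unfolding x_def by (intro sum.mono_neutral_right) auto
    also have "\<dots> = (\<Sum>t\<in>T. (z t)^2) / r^2" unfolding x_def by (simp add: power_divide sum_divide_distrib)
    also have "\<dots> = 1" using r False by simp
    finally have "norm x = 1" using norm_ge_zero[of x] by (auto simp: power2_eq_1_iff)
    then have xS: "x \<in> S" unfolding S_def x_def by auto
    have "qf M T (\<lambda>t. x$t) = qf M T z / r^2"
      unfolding qf_def x_def by (simp add: sum_divide_distrib power2_eq_square)
    with mn[OF xS] have "\<mu> \<le> qf M T z / r^2" unfolding \<mu>_def by simp
    moreover have r2: "r^2 > 0" using r(1) by simp
    ultimately have "\<mu> * r^2 \<le> qf M T z" by (simp add: le_divide_eq)
    then show ?thesis using r(2) by simp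
  qed
  define g where "g = (\<lambda>s. (\<Sum>t\<in>T. M s t * x0$t) - \<mu> * x0$s)"
  have x0n: "(\<Sum>t\<in>T. (x0$t)^2) = 1" by (rule nS[OF x0])
  have Bg: "qf M T g - \<mu> * (\<Sum>t\<in>T. (g t)^2) \<ge> 0" using lower[of g] by simp
  have "2 * \<tau> * (\<Sum>s\<in>T. (g s)^2) + \<tau>^2 * (qf M T g - \<mu> * (\<Sum>t\<in>T. (g t)^2)) \<ge> 0" for \<tau>
  proof -
    have "0 \<le> qf M T (\<lambda>t. x0$t + \<tau> * g t) - \<mu> * (\<Sum>t\<in>T. (x0$t + \<tau> * g t)^2)"
      using lower[of "\<lambda>t. x0$t + \<tau> * g t"] by simp
    also have "\<dots> = \<mu> + 2 * \<tau> * (\<Sum>s\<in>T. g s * (\<Sum>t\<in>T. M s t * x0$t)) + \<tau>^2 * qf M T g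
        - \<mu> * ((\<Sum>t\<in>T. (x0$t)^2) + 2 * \<tau> * (\<Sum>t\<in>T. g t * x0$t) + \<tau>^2 * (\<Sum>t\<in>T. (g t)^2))"
      unfolding qf_expand[OF sym fT] \<mu>_def
      by (simp add: power2_eq_square algebra_simps sum.distrib sum_distrib_left)
    also have "\<dots> = 2 * \<tau> * (\<Sum>s\<in>T. (g s)^2) + \<tau>^2 * (qf M T g - \<mu> * (\<Sum>t\<in>T. (g t)^2))"
      unfolding x0n by (simp add: g_def power2_eq_square algebra_simps sum_subtractf sum_distrib_left sum.distrib)
    finally show ?thesis .
  qed
  then have "(\<Sum>s\<in>T. (g s)^2) = 0" using quad_zero[OF Bg] by (simp add: mult.commute)
  then have g0: "\<forall>s\<in>T. g s = 0" using fT by (simp add: sum_nonneg_eq_0_iff)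
  have "eig_sub M T \<mu>" unfolding eig_sub_def
  proof (intro exI conjI)
    show "\<exists>i\<in>T. x0$i \<noteq> 0" using x0n by (metis (no_types, lifting) power2_eq_square mult_zero_left sum.neutral zero_neq_one)
    show "\<forall>i. i \<notin> T \<longrightarrow> x0$i = 0" using x0 unfolding S_def by auto
    show "\<forall>i\<in>T. (\<Sum>j\<in>T. M i j * x0$j) = \<mu> * x0$i" using g0 unfolding g_def by simp
  qed
  then show ?thesis using lower by blast
qed



lemma eig_orth:
  fixes M :: "'k::finite \<Rightarrow> 'k \<Rightarrow> real"
  assumes sym: "symm M"
    and x: "\<forall>i. i \<notin> T \<longrightarrow> x i = 0" "\<forall>i\<in>T. (\<Sum>j\<in>T. M i j * x j) = lam * x i"
    and z: "\<forall>i. i \<notin> T \<longrightarrow> z i = 0" "\<forall>i\<in>T. (\<Sum>j\<in>T. M i j * z j) = mu * z i"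
    and ne: "lam \<noteq> mu"
  shows "vec_lambda x \<bullet> vec_lambda z = 0"
proof -
  have fT: "finite T" by simp
  have ip: "vec_lambda x \<bullet> vec_lambda z = (\<Sum>i\<in>T. x i * z i)"
    unfolding inner_vec_def using x(1) by (simp, intro sum.mono_neutral_right) auto
  have "lam * (\<Sum>i\<in>T. x i * z i) = (\<Sum>i\<in>T. (lam * x i) * z i)" by (simp add: sum_distrib_left algebra_simps)
  also have "\<dots> = (\<Sum>i\<in>T. (\<Sum>j\<in>T. M i j * x j) * z i)" using x(2) by simp
  also have "\<dots> = (\<Sum>j\<in>T. x j * (\<Sum>i\<in>T. M j i * z i))"
    apply (simp add: sum_distrib_left sum_distrib_right)
    apply (subst sum.swap)
    using sym unfolding symm_def by (simp add: algebra_simps)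
  also have "\<dots> = (\<Sum>j\<in>T. x j * (mu * z j))" using z(2) by simp
  also have "\<dots> = mu * (\<Sum>i\<in>T. x i * z i)" by (simp add: sum_distrib_left algebra_simps)
  finally have "(lam - mu) * (\<Sum>i\<in>T. x i * z i) = 0" by (simp add: algebra_simps)
  then show ?thesis using ne ip by simp
qed

lemma eig_finite:
  fixes M :: "'k::finite \<Rightarrow> 'k \<Rightarrow> real"
  assumes sym: "symm M"
  shows "finite {lam. eig_sub M T lam}"
proof -
  define E where "E = {lam. eig_sub M T lam}"
  define P where "P = (\<lambda>lam (x::'k \<Rightarrow> real). (\<exists>i\<in>T. x i \<noteq> 0) \<and> (\<forall>i. i \<notin> T \<longrightarrow> x i = 0) \<and>
      (\<forall>i\<in>T. (\<Sum>j\<in>T. M i j * x j) = lam * x i))"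
  define V where "V = (\<lambda>lam. vec_lambda (SOME x. P lam x) :: real^'k)"
  have PV: "P lam (SOME x. P lam x)" if "lam \<in> E" for lam
  proof -
    have "\<exists>x. P lam x" using that unfolding E_def eig_sub_def P_def by simp
    then show ?thesis by (rule someI_ex)
  qed
  have nz: "V lam \<noteq> 0" if "lam \<in> E" for lam
  proof
    assume "V lam = 0"
    then have "\<And>i. V lam $ i = 0" by simp
    then have "\<And>i. (SOME x. P lam x) i = 0" unfolding V_def by simp
    then show False using PV[OF that] unfolding P_def by auto
  qed
  have orth: "V lam \<bullet> V mu = 0" if "lam \<in> E" "mu \<in> E" "lam \<noteq> mu" for lam mu
  proof -
    have a: "P lam (SOME x. P lam x)" "P mu (SOME x. P mu x)" using PV that by auto
    show ?thesis unfolding V_def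
      apply (rule eig_orth[where T=T, OF sym _ _ _ _ that(3)])
      using a unfolding P_def by blast+
  qed
  have inj: "inj_on V E"
  proof (rule inj_onI, rule ccontr)
    fix lam mu assume h: "lam \<in> E" "mu \<in> E" "V lam = V mu" "lam \<noteq> mu"
    then have "V lam \<bullet> V lam = 0" using orth[of lam mu] by simp
    then show False using nz[OF h(1)] by simp
  qed
  have "pairwise orthogonal (V ` E)"
    unfolding pairwise_def orthogonal_def using orth by auto
  moreover have "0 \<notin> V ` E" using nz by auto
  ultimately have "independent (V ` E)" by (rule pairwise_orthogonal_independent)
  then have "finite (V ` E)" using independent_bound by blast
  then have "finite E" using inj by (rule finite_imageD)
  then show ?thesis unfolding E_def .
qed

lemma min_eig_le:
  fixes M :: "'k::finite \<Rightarrow> 'k \<Rightarrow> real"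
  assumes sym: "symm M" and T: "card T \<le> s" and ev: "eig_sub M T lam"
  shows "min_sub_eig s M \<le> lam"
proof -
  have "{lam. \<exists>T. card T \<le> s \<and> eig_sub M T lam} \<subseteq> (\<Union>T\<in>UNIV. {lam. eig_sub M T lam})" by auto
  moreover have "finite (\<Union>T\<in>(UNIV::'k set set). {lam. eig_sub M T lam})"
    using eig_finite[OF sym] by auto
  ultimately have fin: "finite {lam. \<exists>T. card T \<le> s \<and> eig_sub M T lam}" by (rule finite_subset)
  show ?thesis unfolding min_sub_eig_def using T ev by (intro Min_le[OF fin]) auto
qed

lemma qf_lower:
  fixes M :: "'k::finite \<Rightarrow> 'k \<Rightarrow> real"
  assumes sym: "symm M" and T: "card T \<le> s"
  shows "qf M T z \<ge> min_sub_eig s M * (\<Sum>t\<in>T. (z t)^2)"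
proof (cases "T = {}")
  case True then show ?thesis by (simp add: qf_def)
next
  case False
  from rayleigh_min[OF sym False] obtain \<mu> where mu: "eig_sub M T \<mu>" "\<forall>z. qf M T z \<ge> \<mu> * (\<Sum>t\<in>T. (z t)^2)"
    by blast
  have "min_sub_eig s M \<le> \<mu>" by (rule min_eig_le[OF sym T mu(1)])
  moreover have "(\<Sum>t\<in>T. (z t)^2) \<ge> 0" by (intro sum_nonneg) auto
  ultimately have "min_sub_eig s M * (\<Sum>t\<in>T. (z t)^2) \<le> \<mu> * (\<Sum>t\<in>T. (z t)^2)"
    by (rule mult_right_mono)
  then show ?thesis using mu(2) by (meson order_trans)
qed



lemma gram_sum: fixes A :: "real^'p^'n" and B :: "real^'q^'n" shows
  "(\<Sum>i\<in>UNIV. \<Sum>j\<in>UNIV. k * gram A B i j * u$i * w$j) = k * (\<Sum>r\<in>UNIV. (A *v u)$r * (B *v w)$r)"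
proof -
  have "(\<Sum>i\<in>UNIV. \<Sum>j\<in>UNIV. k * gram A B i j * u$i * w$j)
      = (\<Sum>i\<in>UNIV. \<Sum>j\<in>UNIV. \<Sum>r\<in>UNIV. k * (A$r$i * u$i) * (B$r$j * w$j))"
    unfolding gram_def by (simp add: sum_distrib_left sum_distrib_right algebra_simps)
  also have "\<dots> = (\<Sum>i\<in>UNIV. \<Sum>r\<in>UNIV. \<Sum>j\<in>UNIV. k * (A$r$i * u$i) * (B$r$j * w$j))"
    by (rule sum.cong[OF refl], rule sum.swap)
  also have "\<dots> = (\<Sum>r\<in>UNIV. \<Sum>i\<in>UNIV. \<Sum>j\<in>UNIV. k * (A$r$i * u$i) * (B$r$j * w$j))"
    by (rule sum.swap)
  also have "\<dots> = k * (\<Sum>r\<in>UNIV. (\<Sum>i\<in>UNIV. A$r$i * u$i) * (\<Sum>j\<in>UNIV. B$r$j * w$j))"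
  proof -
    have "\<And>r. k * ((\<Sum>i\<in>UNIV. A$r$i * u$i) * (\<Sum>j\<in>UNIV. B$r$j * w$j))
      = (\<Sum>i\<in>UNIV. \<Sum>j\<in>UNIV. k * (A$r$i * u$i) * (B$r$j * w$j))"
      by (subst sum_product) (simp add: sum_distrib_left mult.assoc)
    then show ?thesis by (simp add: sum_distrib_left)
  qed
  also have "\<dots> = k * (\<Sum>r\<in>UNIV. (A *v u)$r * (B *v w)$r)"
    by (simp add: matrix_vector_mult_def)
  finally show ?thesis .
qed

lemma lf_symm: "symm (lf_matrix L a b c X Z)"
  unfolding symm_def
proof (intro allI)
  fix s t :: "'a + 'b"
  have g: "\<And>A B i j. gram A B i j = gram B A j i" by (simp add: gram_def mult.commute)
  show "lf_matrix L a b c X Z s t = lf_matrix L a b c X Z t s"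
    by (cases L; cases s; cases t) (auto simp: lf_matrix_def Let_def g[of X X] g[of Z Z] g[of X Z])
qed

definition aL :: "loss_kind \<Rightarrow> real \<Rightarrow> real" where
  "aL L a = (case L of Lin \<Rightarrow> a | Log \<Rightarrow> 0)"

lemma qf_lf: fixes X :: "real^'p1^'n" and Z :: "real^'p2^'n" shows
  "qf (lf_matrix L a b c X Z) UNIV (comp h) = (1 / real CARD('n)) *
     (aL L a * (\<Sum>i\<in>UNIV. ((X *v fst h)$i)^2) + aL L b * (\<Sum>i\<in>UNIV. ((Z *v snd h)$i)^2)
     + c * (\<Sum>i\<in>UNIV. ((X *v fst h)$i - (Z *v snd h)$i)^2))"
proof -
  have g: "\<And>A B i j. gram A B i j = gram B A j i" by (simp add: gram_def mult.commute)
  have "qf (lf_matrix L a b c X Z) UNIV (comp h) =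
     (\<Sum>i\<in>UNIV. \<Sum>j\<in>UNIV. ((aL L a + c) / real CARD('n)) * gram X X i j * fst h$i * fst h$j)
   + (\<Sum>i\<in>UNIV. \<Sum>j\<in>UNIV. (- c / real CARD('n)) * gram X Z i j * fst h$i * snd h$j)
   + ((\<Sum>i\<in>UNIV. \<Sum>j\<in>UNIV. (- c / real CARD('n)) * gram Z X i j * snd h$i * fst h$j)
   + (\<Sum>i\<in>UNIV. \<Sum>j\<in>UNIV. ((aL L b + c) / real CARD('n)) * gram Z Z i j * snd h$i * snd h$j))"
    unfolding qf_def sum_UNIV_plus
    by (cases L) (simp_all add: lf_matrix_def Let_def aL_def sum.distrib algebra_simps)
  also have "\<dots> = (1 / real CARD('n)) *
     (aL L a * (\<Sum>i\<in>UNIV. ((X *v fst h)$i)^2) + aL L b * (\<Sum>i\<in>UNIV. ((Z *v snd h)$i)^2)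
     + c * (\<Sum>i\<in>UNIV. ((X *v fst h)$i - (Z *v snd h)$i)^2))"
    unfolding gram_sum
    by (simp add: power2_eq_square algebra_simps sum.distrib sum_subtractf sum_distrib_left sum_divide_distrib
        diff_divide_distrib add_divide_distrib sum_negf)
  finally show ?thesis .
qed

lemma H_ge_qf: fixes X :: "real^'p1^'n" and Z :: "real^'p2^'n"
  assumes "a \<ge> 0" "b \<ge> 0"
  shows "h \<bullet> Hfun L a b c X Z x h \<ge> qf (lf_matrix L a b c X Z) UNIV (comp h)"
proof (cases L)
  case Lin then show ?thesis by (simp add: Hquad qf_lf aL_def psi2_def)
next
  case Log
  have "0 \<le> a * (\<Sum>i\<in>UNIV. psi2 L ((X *v fst x)$i) * ((X *v fst h)$i)^2)"
    using assms psi2_nonneg by (intro mult_nonneg_nonneg sum_nonneg) auto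
  moreover have "0 \<le> b * (\<Sum>i\<in>UNIV. psi2 L ((Z *v snd x)$i) * ((Z *v snd h)$i)^2)"
    using assms psi2_nonneg by (intro mult_nonneg_nonneg sum_nonneg) auto
  ultimately show ?thesis using Log unfolding Hquad qf_lf aL_def
    by (simp add: divide_right_mono)
qed

lemma qf_supp: assumes "suppP h \<subseteq> T"
  shows "qf M UNIV (comp h) = qf M T (comp h)"
proof -
  have z: "\<And>t. t \<notin> T \<Longrightarrow> comp h t = 0" using assms unfolding suppP_def by auto
  have "(\<Sum>s\<in>UNIV. \<Sum>t\<in>UNIV. M s t * comp h s * comp h t) = (\<Sum>s\<in>T. \<Sum>t\<in>UNIV. M s t * comp h s * comp h t)"
    by (rule sum.mono_neutral_right) (auto simp: z)
  also have "\<dots> = (\<Sum>s\<in>T. \<Sum>t\<in>T. M s t * comp h s * comp h t)"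
    by (rule sum.cong[OF refl], rule sum.mono_neutral_right) (auto simp: z)
  finally show ?thesis unfolding qf_def .
qed

lemma H_sparse: fixes X :: "real^'p1^'n" and Z :: "real^'p2^'n"
  assumes "a \<ge> 0" "b \<ge> 0" "card (suppP h) \<le> s"
  shows "h \<bullet> Hfun L a b c X Z x h \<ge> l_f L a b c X Z s * (norm h)^2"
proof -
  have "(norm h)^2 = (\<Sum>t\<in>suppP h. (comp h t)^2)"
    unfolding sq_norm_comp by (rule sum.mono_neutral_right) (auto simp: suppP_def)
  then have "l_f L a b c X Z s * (norm h)^2 \<le> qf (lf_matrix L a b c X Z) (suppP h) (comp h)"
    unfolding l_f_def using qf_lower[OF lf_symm assms(3)] by simp
  also have "\<dots> = qf (lf_matrix L a b c X Z) UNIV (comp h)" by (rule qf_supp[symmetric]) simp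
  also have "\<dots> \<le> h \<bullet> Hfun L a b c X Z x h" by (rule H_ge_qf[OF assms(1,2)])
  finally show ?thesis .
qed



lemma proj_sq: assumes "u \<in> proj_sparse s w" "u' \<in> SparseSet s"
  shows "(\<Sum>j\<in>UNIV. (w$j - u$j)^2) \<le> (\<Sum>j\<in>UNIV. (w$j - u'$j)^2)"
proof -
  have "norm (w - u) \<le> norm (w - u')" using assms unfolding proj_sparse_def by auto
  then have "(norm (w - u))^2 \<le> (norm (w - u'))^2" by (simp add: power_mono)
  then show ?thesis by (simp add: sq_norm_vec)
qed

lemma proj_in: "u \<in> proj_sparse s w \<Longrightarrow> l0 u \<le> s"
  unfolding proj_sparse_def SparseSet_def by auto

lemma proj_P1: assumes u: "u \<in> proj_sparse s w" and i: "i \<in> supp u"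
  shows "u$i = w$i"
proof -
  define u' where "u' = (\<chi> j. if j = i then w$i else u$j)"
  have "supp u' \<subseteq> supp u" using i unfolding supp_def u'_def by auto
  then have "l0 u' \<le> l0 u" unfolding l0_def by (simp add: card_mono)
  then have "u' \<in> SparseSet s" using proj_in[OF u] unfolding SparseSet_def by simp
  from proj_sq[OF u this] have "0 \<le> (\<Sum>j\<in>UNIV. (w$j - u'$j)^2 - (w$j - u$j)^2)"
    by (simp add: sum_subtractf)
  also have "\<dots> = (\<Sum>j\<in>UNIV. if j = i then - ((w$i - u$i)^2) else 0)"
    by (rule sum.cong) (auto simp: u'_def)
  also have "\<dots> = - ((w$i - u$i)^2)" by simp
  finally show ?thesis by simp
qed

lemma proj_P3: assumes u: "u \<in> proj_sparse s w" and l: "l0 u < s" and i: "i \<notin> supp u"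
  shows "w$i = 0"
proof -
  define u' where "u' = (\<chi> j. if j = i then w$i else u$j)"
  have "supp u' \<subseteq> insert i (supp u)" unfolding supp_def u'_def by auto
  then have "card (supp u') \<le> card (insert i (supp u))" by (intro card_mono) auto
  moreover have "card (insert i (supp u)) \<le> card (supp u) + 1" by (simp add: card_insert_if)
  ultimately have "l0 u' \<le> l0 u + 1" unfolding l0_def by linarith
  then have "u' \<in> SparseSet s" using l unfolding SparseSet_def by simp
  from proj_sq[OF u this] have "0 \<le> (\<Sum>j\<in>UNIV. (w$j - u'$j)^2 - (w$j - u$j)^2)"
    by (simp add: sum_subtractf)
  also have "\<dots> = (\<Sum>j\<in>UNIV. if j = i then - ((w$i - u$i)^2) else 0)"
    by (rule sum.cong) (auto simp: u'_def)
  also have "\<dots> = - ((w$i - u$i)^2)" by simp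
  finally have "w$i = u$i" by simp
  moreover have "u$i = 0" using i unfolding supp_def by simp
  ultimately show ?thesis by simp
qed

lemma proj_P2: assumes u: "u \<in> proj_sparse s w" and i: "i \<notin> supp u" and m: "m \<in> supp u"
  shows "\<bar>w$i\<bar> \<le> \<bar>w$m\<bar>"
proof -
  have im: "i \<noteq> m" using i m by auto
  have um: "u$m = w$m" by (rule proj_P1[OF u m])
  have ui: "u$i = 0" using i unfolding supp_def by simp
  define u' where "u' = (\<chi> j. if j = i then w$i else if j = m then 0 else u$j)"
  have "supp u' \<subseteq> insert i (supp u - {m})" unfolding supp_def u'_def by auto
  then have "card (supp u') \<le> card (insert i (supp u - {m}))" by (intro card_mono) auto
  moreover have "card (insert i (supp u - {m})) \<le> card (supp u - {m}) + 1" by (simp add: card_insert_if)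
  ultimately have "l0 u' \<le> card (supp u - {m}) + 1" unfolding l0_def by linarith
  also have "\<dots> = l0 u" unfolding l0_def using card_Suc_Diff1[of "supp u" m] m by simp
  finally have "u' \<in> SparseSet s" using proj_in[OF u] unfolding SparseSet_def by simp
  from proj_sq[OF u this] have "0 \<le> (\<Sum>j\<in>UNIV. (w$j - u'$j)^2 - (w$j - u$j)^2)"
    by (simp add: sum_subtractf)
  also have "\<dots> = (\<Sum>j\<in>UNIV. (if j = i then - ((w$i)^2) else 0) + (if j = m then (w$m)^2 else 0))"
    by (rule sum.cong) (auto simp: u'_def um ui im)
  also have "\<dots> = (w$m)^2 - ((w$i)^2)" by (simp add: sum.distrib)
  finally have "(w$i)^2 \<le> (w$m)^2" by simp
  then show ?thesis using abs_le_square_iff by blast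
qed



lemma supp_ev: fixes x :: "nat \<Rightarrow> real^'p" assumes "x \<longlonglongrightarrow> xs"
  shows "eventually (\<lambda>k. supp xs \<subseteq> supp (x k)) sequentially"
proof -
  have "\<forall>i\<in>supp xs. eventually (\<lambda>k. x k $ i \<noteq> 0) sequentially"
    using tendsto_imp_eventually_ne[OF tendsto_vec_nth[OF assms]] unfolding supp_def by auto
  then have "eventually (\<lambda>k. \<forall>i\<in>supp xs. x k $ i \<noteq> 0) sequentially"
    by (intro eventually_ball_finite) auto
  then show ?thesis by eventually_elim (auto simp: supp_def)
qed

lemma supp_eq_ev: fixes x :: "nat \<Rightarrow> real^'p" assumes "x \<longlonglongrightarrow> xs" "\<forall>k. l0 (x k) \<le> s" "l0 xs = s"
  shows "eventually (\<lambda>k. supp xs = supp (x k)) sequentially"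
  using supp_ev[OF assms(1)]
proof eventually_elim
  case (elim k)
  have "card (supp (x k)) \<le> card (supp xs)" using assms(2,3) unfolding l0_def by metis
  moreover have "card (supp xs) \<le> card (supp (x k))" using elim by (intro card_mono) auto
  ultimately show ?case using elim by (intro card_subset_eq) auto
qed

lemma l0_limit: fixes x :: "nat \<Rightarrow> real^'p" assumes "x \<longlonglongrightarrow> xs" "\<forall>k. l0 (x k) \<le> s"
  shows "l0 xs \<le> s"
proof -
  obtain k where "supp xs \<subseteq> supp (x k)" using supp_ev[OF assms(1)] by (metis eventually_sequentially order_refl)
  then have "l0 xs \<le> l0 (x k)" unfolding l0_def by (intro card_mono) auto
  then show ?thesis using assms(2) by (metis order_trans)
qed

lemma stat_comp:
  fixes b p g :: "nat \<Rightarrow> real^'p" and al :: "nat \<Rightarrow> real"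
  assumes proj: "\<And>k. p k \<in> proj_sparse s (b k - al k *\<^sub>R g k)"
    and al: "\<And>k. al k \<ge> amin" and amin: "amin > 0"
    and lb: "b \<longlonglongrightarrow> bs" and lp: "p \<longlonglongrightarrow> bs" and lg: "g \<longlonglongrightarrow> gs"
  shows "\<forall>i\<in>supp bs. gs$i = 0" and "l0 bs < s \<Longrightarrow> gs = 0"
proof -
  have alp: "al k > 0" for k using al[of k] amin by linarith
  have lgi: "(\<lambda>k. \<bar>g k $ i\<bar>) \<longlonglongrightarrow> \<bar>gs$i\<bar>" for i by (intro tendsto_rabs tendsto_vec_nth lg)
  have bnd1: "\<bar>g k $ i\<bar> \<le> \<bar>b k $ i - p k $ i\<bar> / amin" if "i \<in> supp (p k)" for k i
  proof -
    have "p k $ i = b k $ i - al k * g k $ i" using proj_P1[OF proj that] by simp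
    then have "al k * \<bar>g k $ i\<bar> = \<bar>b k $ i - p k $ i\<bar>" using alp[of k] by (simp add: abs_mult)
    moreover have "amin * \<bar>g k $ i\<bar> \<le> al k * \<bar>g k $ i\<bar>" using al[of k] by (simp add: mult_right_mono)
    ultimately show ?thesis using amin by (simp add: le_divide_eq mult.commute)
  qed
  show S1: "\<forall>i\<in>supp bs. gs$i = 0"
  proof
    fix i assume i: "i \<in> supp bs"
    have ev: "eventually (\<lambda>k. i \<in> supp (p k)) sequentially"
      using supp_ev[OF lp] i by (auto elim: eventually_mono)
    have "(\<lambda>k. \<bar>b k $ i - p k $ i\<bar> / amin) \<longlonglongrightarrow> \<bar>bs $ i - bs $ i\<bar> / amin"
      by (intro tendsto_intros tendsto_vec_nth lb lp) (use amin in auto)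
    then have t0: "(\<lambda>k. \<bar>b k $ i - p k $ i\<bar> / amin) \<longlonglongrightarrow> 0" by simp
    have "\<bar>gs$i\<bar> \<le> 0"
      by (rule LIMSEQ_le[OF lgi t0]) (use ev bnd1 in \<open>auto simp: eventually_sequentially\<close>)
    then show "gs$i = 0" by simp
  qed
  assume l: "l0 bs < s"
  show "gs = 0"
  proof (rule vec_eq_iff[THEN iffD2], rule allI)
    fix i
    show "gs$i = 0 $ i"
    proof (cases "i \<in> supp bs")
      case True then show ?thesis using S1 by simp
    next
      case False
      then have bs0: "bs $ i = 0" unfolding supp_def by simp
      define e where "e = (\<lambda>k. (\<bar>b k $ i - p k $ i\<bar> + \<bar>b k $ i\<bar> + norm (p k - bs)) / amin)"
      have "e \<longlonglongrightarrow> (\<bar>bs $ i - bs $ i\<bar> + \<bar>bs $ i\<bar> + norm (bs - bs)) / amin"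
        unfolding e_def by (intro tendsto_intros tendsto_vec_nth lb lp) (use amin in auto)
      then have e0: "e \<longlonglongrightarrow> 0" using bs0 by simp
      have bnd: "\<bar>g k $ i\<bar> \<le> e k" for k
      proof (cases "i \<in> supp (p k)")
        case True
        have "\<bar>b k $ i - p k $ i\<bar> / amin \<le> e k" unfolding e_def using amin
          by (intro divide_right_mono) auto
        then show ?thesis using bnd1[OF True] by linarith
      next
        case ni: False
        have wi_bnd: "\<bar>b k $ i - al k * g k $ i\<bar> \<le> norm (p k - bs)"
        proof (cases "l0 (p k) < s")
          case True
          have "(b k - al k *\<^sub>R g k) $ i = 0" by (rule proj_P3[OF proj True ni])
          then show ?thesis by simp
        next
          case False
          then have "l0 (p k) = s" using proj_in[OF proj] by (metis le_neq_implies_less)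
          then have "\<not> supp (p k) \<subseteq> supp bs" using l unfolding l0_def
            by (metis card_mono finite leD)
          then obtain m where m: "m \<in> supp (p k)" "m \<notin> supp bs" by blast
          have "\<bar>(b k - al k *\<^sub>R g k) $ i\<bar> \<le> \<bar>(b k - al k *\<^sub>R g k) $ m\<bar>" by (rule proj_P2[OF proj ni m(1)])
          also have "\<dots> = \<bar>p k $ m\<bar>" using proj_P1[OF proj m(1)] by simp
          also have "\<dots> = \<bar>(p k - bs) $ m\<bar>" using m(2) unfolding supp_def by simp
          also have "\<dots> \<le> norm (p k - bs)" by (rule component_le_norm_cart)
          finally show ?thesis by simp
        qed
        have "al k * \<bar>g k $ i\<bar> \<le> \<bar>b k $ i\<bar> + norm (p k - bs)"
          using wi_bnd alp[of k] by (simp add: abs_mult)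
        moreover have "amin * \<bar>g k $ i\<bar> \<le> al k * \<bar>g k $ i\<bar>" using al[of k] by (simp add: mult_right_mono)
        ultimately have "\<bar>g k $ i\<bar> \<le> (\<bar>b k $ i\<bar> + norm (p k - bs)) / amin" using amin
          by (simp add: le_divide_eq mult.commute)
        also have "\<dots> \<le> e k" unfolding e_def using amin by (intro divide_right_mono) auto
        finally show ?thesis .
      qed
      have "\<bar>gs$i\<bar> \<le> 0" by (rule LIMSEQ_le[OF lgi e0]) (use bnd in auto)
      then show ?thesis by simp
    qed
  qed
qed



definition rs :: "('p1 + 'p2) set \<Rightarrow> (real^'p1) \<times> (real^'p2) \<Rightarrow> (real^'p1) \<times> (real^'p2)" where
  "rs \<Gamma> w = ((\<chi> i. if Inl i \<in> \<Gamma> then fst w $ i else 0), (\<chi> j. if Inr j \<in> \<Gamma> then snd w $ j else 0))"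

lemma comp_rs: "comp (rs \<Gamma> w) t = (if t \<in> \<Gamma> then comp w t else 0)"
  by (cases t) (auto simp: rs_def)

lemma comp_add: "comp (x + y) t = comp x t + comp y t" by (cases t) auto
lemma comp_diff: "comp (x - y) t = comp x t - comp y t" by (cases t) auto
lemma comp_minus: "comp (- x) t = - comp x t" by (cases t) auto
lemma comp_zero: "comp 0 t = 0" by (cases t) auto
lemma comp_scale: "comp (r *\<^sub>R x) t = r * comp x t" by (cases t) auto

lemma comp_eq: "(\<forall>t. comp x t = comp y t) \<Longrightarrow> x = y"
  apply (cases x, cases y)
  apply (auto simp: vec_eq_iff)
   apply (metis comp.simps(1) fst_conv)
  apply (metis comp.simps(2) snd_conv)
  done

lemma linear_rs: "linear (rs \<Gamma>)"
  by (rule linearI; rule comp_eq; simp add: comp_rs comp_add comp_scale)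

lemma inner_supp: assumes "\<forall>t. t \<notin> \<Gamma> \<longrightarrow> comp d t = 0"
  shows "g \<bullet> d = (\<Sum>t\<in>\<Gamma>. comp g t * comp d t)"
  unfolding inner_comp using assms by (intro sum.mono_neutral_right) auto

lemma card_suppP_le: assumes "\<forall>t. t \<notin> \<Gamma> \<longrightarrow> comp d t = 0" shows "card (suppP d) \<le> card \<Gamma>"
  using assms unfolding suppP_def by (intro card_mono) auto

lemma newton_exists: fixes X :: "real^'p1^'n" and Z :: "real^'p2^'n"
  assumes lf: "l_f L a b c X Z s > 0" and ab: "a \<ge> 0" "b \<ge> 0" and G: "card \<Gamma> \<le> s"
  shows "\<exists>d. (\<forall>t. t \<notin> \<Gamma> \<longrightarrow> comp d t = 0) \<and>
     (\<forall>t\<in>\<Gamma>. comp (Hfun L a b c X Z u d) t = - comp (Gfun L a b c X Z y u) t)"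
proof -
  let ?H = "Hfun L a b c X Z u"
  have linH: "linear ?H" using has_derivative_bounded_linear[OF Gfun_deriv] bounded_linear.linear by blast
  define T where "T = (\<lambda>d. rs \<Gamma> (?H (rs \<Gamma> d)) + (d - rs \<Gamma> d))"
  have linT: "linear T" unfolding T_def
    by (intro linear_compose_add linear_compose_sub linear_id[unfolded id_def] linear_compose[OF linear_rs, unfolded o_def]
        linear_compose[OF _ linear_rs, unfolded o_def] linear_compose[OF linH linear_rs, unfolded o_def]) 
  have compT: "comp (T d) t = (if t \<in> \<Gamma> then comp (?H (rs \<Gamma> d)) t else comp d t)" for d t
    unfolding T_def by (simp add: comp_add comp_diff comp_rs)
  have "inj T"
  proof (subst linear_injective_0[OF linT], intro allI impI)
    fix d assume T0: "T d = 0"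
    have off: "\<forall>t. t \<notin> \<Gamma> \<longrightarrow> comp d t = 0" using T0 compT by (metis comp_zero)
    then have rd: "rs \<Gamma> d = d" by (intro comp_eq) (auto simp: comp_rs)
    have on: "\<forall>t\<in>\<Gamma>. comp (?H d) t = 0" using T0 compT rd by (metis comp_zero)
    have "d \<bullet> ?H d = 0"
      by (subst inner_commute, subst inner_supp[OF off]) (simp add: on)
    moreover have "d \<bullet> ?H d \<ge> l_f L a b c X Z s * (norm d)^2"
      using H_sparse[OF ab, of d s L c X Z u] card_suppP_le[OF off] G by simp
    ultimately have "l_f L a b c X Z s * (norm d)^2 \<le> 0" by simp
    then have "(norm d)^2 \<le> 0" using lf by (simp add: mult_le_0_iff)
    then show "d = 0" by simp
  qed
  then have "surj T" by (intro eucl.linear_injective_imp_surjective linT) auto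
  then obtain d where d: "T d = - rs \<Gamma> (Gfun L a b c X Z y u)" by (metis surjD)
  have off: "\<forall>t. t \<notin> \<Gamma> \<longrightarrow> comp d t = 0"
    using d compT by (metis comp_minus comp_rs minus_zero)
  then have rd: "rs \<Gamma> d = d" by (intro comp_eq) (auto simp: comp_rs)
  have "\<forall>t\<in>\<Gamma>. comp (?H d) t = - comp (Gfun L a b c X Z y u) t"
    using d compT rd by (metis comp_minus comp_rs)
  then show ?thesis using off by blast
qed

definition Cr :: "real \<Rightarrow> real \<Rightarrow> real^'p1^'n \<Rightarrow> real^'p2^'n \<Rightarrow> real" where
  "Cr a b X Z = (a + b) * (Kc X Z)^3"

lemma newton_descent: fixes X :: "real^'p1^'n" and Z :: "real^'p2^'n"
  assumes lf: "l_f L a b c X Z s > \<sigma>" and sig: "\<sigma> > 0" and abc: "a \<ge> 0" "b \<ge> 0" "c \<ge> 0"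
    and G: "card \<Gamma> \<le> s"
    and off: "\<forall>t. t \<notin> \<Gamma> \<longrightarrow> comp d t = 0"
    and sol: "\<forall>t\<in>\<Gamma>. comp (Hfun L a b c X Z u d) t = - comp (Gfun L a b c X Z y u) t"
    and small: "norm (rs \<Gamma> (Gfun L a b c X Z y u)) \<le> l_f L a b c X Z s * (l_f L a b c X Z s - \<sigma>) / (2 * (Cr a b X Z + 1))"
  shows "fobj L a b c X Z y (u + d) \<le> fobj L a b c X Z y u - \<sigma>/2 * (norm d)^2"
proof -
  let ?l = "l_f L a b c X Z s"
  let ?g = "Gfun L a b c X Z y u"
  let ?Hd = "Hfun L a b c X Z u d"
  let ?C = "Cr a b X Z"
  have lpos: "?l > 0" using lf sig by linarith
  have Cnn: "?C \<ge> 0" unfolding Cr_def using abc Kc_pos[of X Z] by simp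
  have gd: "?g \<bullet> d = - (d \<bullet> ?Hd)"
  proof -
    have "?g \<bullet> d = (\<Sum>t\<in>\<Gamma>. comp ?g t * comp d t)" by (rule inner_supp[OF off])
    also have "\<dots> = (\<Sum>t\<in>\<Gamma>. - (comp ?Hd t * comp d t))" using sol by (intro sum.cong) auto
    also have "\<dots> = - (?Hd \<bullet> d)" by (simp add: inner_supp[OF off] sum_negf)
    finally show ?thesis by (simp add: inner_commute)
  qed
  have grd: "?g \<bullet> d = rs \<Gamma> ?g \<bullet> d"
    by (simp add: inner_supp[OF off] comp_rs)
  have hq: "d \<bullet> ?Hd \<ge> ?l * (norm d)^2"
    using H_sparse[OF abc(1,2), of d s L c X Z u] card_suppP_le[OF off] G by simp
  have nd: "norm d \<le> norm (rs \<Gamma> ?g) / ?l"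
  proof (cases "d = 0")
    case True then show ?thesis using lpos by simp
  next
    case False
    have "?l * (norm d)^2 \<le> - (rs \<Gamma> ?g \<bullet> d)" using hq gd grd by simp
    also have "\<dots> \<le> norm (rs \<Gamma> ?g) * norm d" by (metis Cauchy_Schwarz_ineq2 abs_le_iff)
    finally have "(?l * norm d) * norm d \<le> norm (rs \<Gamma> ?g) * norm d" by (simp add: power2_eq_square mult.assoc)
    then have "?l * norm d \<le> norm (rs \<Gamma> ?g)" using False by (simp add: mult_le_cancel_right)
    then show ?thesis using lpos by (simp add: le_divide_eq mult.commute)
  qed
  have nd2: "norm d \<le> (?l - \<sigma>) / (2 * (?C + 1))"
  proof -
    have "norm d \<le> norm (rs \<Gamma> ?g) / ?l" by (rule nd)
    also have "\<dots> \<le> (?l * (?l - \<sigma>) / (2 * (?C + 1))) / ?l" using small lpos by (intro divide_right_mono) auto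
    also have "\<dots> = (?l - \<sigma>) / (2 * (?C + 1))" using lpos by simp
    finally show ?thesis .
  qed
  have cb: "?C * norm d \<le> (?l - \<sigma>) / 2"
  proof -
    have "?C * norm d \<le> ?C * ((?l - \<sigma>) / (2 * (?C + 1)))" using nd2 Cnn by (rule mult_left_mono)
    also have "\<dots> = (?C / (?C + 1)) * ((?l - \<sigma>) / 2)" using Cnn by (simp add: field_simps)
    also have "\<dots> \<le> 1 * ((?l - \<sigma>) / 2)" using Cnn lf by (intro mult_right_mono) auto
    finally show ?thesis by simp
  qed
  have "fobj L a b c X Z y (u + d) \<le> fobj L a b c X Z y u + ?g \<bullet> d + (1/2) * (d \<bullet> ?Hd) + ?C * (norm d)^3"
    using fobj_remainder[OF abc, of L X Z y u d] unfolding Cr_def by simp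
  also have "\<dots> = fobj L a b c X Z y u - (1/2) * (d \<bullet> ?Hd) + (?C * norm d) * (norm d)^2"
    using gd by (simp add: power2_eq_square power3_eq_cube)
  also have "\<dots> \<le> fobj L a b c X Z y u - (1/2) * (?l * (norm d)^2) + ((?l - \<sigma>) / 2) * (norm d)^2"
    using hq cb by (intro add_mono diff_mono mult_right_mono) auto
  also have "\<dots> = fobj L a b c X Z y u - \<sigma>/2 * (norm d)^2" by (simp add: field_simps)
  finally show ?thesis .
qed

lemma ls_ok: fixes X :: "real^'p1^'n" and Z :: "real^'p2^'n"
  assumes abc: "a \<ge> 0" "b \<ge> 0" "c \<ge> 0" and sig: "\<sigma> > 0"
    and bs: "fst bk \<in> SparseSet s1" "snd bk \<in> SparseSet s2"
    and p: "fst p \<in> proj_sparse s1 (fst bk - \<alpha> *\<^sub>R fst (Gfun L a b c X Z y bk))"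
           "snd p \<in> proj_sparse s2 (snd bk - \<alpha> *\<^sub>R snd (Gfun L a b c X Z y bk))"
    and al: "0 < \<alpha>" "\<alpha> \<le> 1 / ((a + b + 4*c) * (Kc X Z)^2 + \<sigma>)"
  shows "fobj L a b c X Z y p \<le> fobj L a b c X Z y bk - \<sigma>/2 * (norm (p - bk))^2"
proof -
  let ?g = "Gfun L a b c X Z y bk"
  let ?Lg = "(a + b + 4*c) * (Kc X Z)^2"
  define d where "d = p - bk"
  have Lg: "?Lg \<ge> 0" using abc by simp
  have n1: "norm (fst d + \<alpha> *\<^sub>R fst ?g) \<le> norm (\<alpha> *\<^sub>R fst ?g)"
  proof -
    have "norm ((fst bk - \<alpha> *\<^sub>R fst ?g) - fst p) \<le> norm ((fst bk - \<alpha> *\<^sub>R fst ?g) - fst bk)"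
      using p(1) bs(1) unfolding proj_sparse_def by blast
    then show ?thesis unfolding d_def by (simp add: norm_minus_commute algebra_simps)
  qed
  have n2: "norm (snd d + \<alpha> *\<^sub>R snd ?g) \<le> norm (\<alpha> *\<^sub>R snd ?g)"
  proof -
    have "norm ((snd bk - \<alpha> *\<^sub>R snd ?g) - snd p) \<le> norm ((snd bk - \<alpha> *\<^sub>R snd ?g) - snd bk)"
      using p(2) bs(2) unfolding proj_sparse_def by blast
    then show ?thesis unfolding d_def by (simp add: norm_minus_commute algebra_simps)
  qed
  have sq: "(norm x)^2 = x \<bullet> x" for x :: "real^'q" by (simp add: power2_norm_eq_inner)
  have "(norm (fst d + \<alpha> *\<^sub>R fst ?g))^2 \<le> (norm (\<alpha> *\<^sub>R fst ?g))^2" using n1 by (simp add: power_mono)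
  then have i1: "(norm (fst d))^2 + 2 * \<alpha> * (fst ?g \<bullet> fst d) \<le> 0"
    unfolding sq by (simp add: inner_add_left inner_add_right inner_commute algebra_simps)
  have "(norm (snd d + \<alpha> *\<^sub>R snd ?g))^2 \<le> (norm (\<alpha> *\<^sub>R snd ?g))^2" using n2 by (simp add: power_mono)
  then have i2: "(norm (snd d))^2 + 2 * \<alpha> * (snd ?g \<bullet> snd d) \<le> 0"
    unfolding sq by (simp add: inner_add_left inner_add_right inner_commute algebra_simps)
  have "(norm d)^2 + 2 * \<alpha> * (?g \<bullet> d) \<le> 0"
    using i1 i2 by (simp add: sq_norm_pair inner_prod_def algebra_simps)
  then have gd: "?g \<bullet> d \<le> - ((norm d)^2 / (2 * \<alpha>))" using al(1) by (simp add: field_simps)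
  have ia: "1 / \<alpha> \<ge> ?Lg + \<sigma>" using al Lg sig by (simp add: field_simps)
  have "fobj L a b c X Z y (bk + d) \<le> fobj L a b c X Z y bk + ?g \<bullet> d + ?Lg / 2 * (norm d)^2"
    by (rule fobj_descent[OF abc])
  also have "\<dots> \<le> fobj L a b c X Z y bk - ((norm d)^2 / (2 * \<alpha>)) + ?Lg / 2 * (norm d)^2" using gd by simp
  also have "\<dots> = fobj L a b c X Z y bk - (1/\<alpha> - ?Lg) / 2 * (norm d)^2" by (simp add: field_simps)
  also have "\<dots> \<le> fobj L a b c X Z y bk - \<sigma> / 2 * (norm d)^2"
    using ia by (intro diff_left_mono mult_right_mono) auto
  finally show ?thesis unfolding d_def by simp
qed



lemma newton_supp: assumes "newton_sol F' u v"
  shows "supp (fst v) \<subseteq> supp (fst u)" "supp (snd v) \<subseteq> supp (snd u)"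
proof -
  have h: "\<And>t. t \<notin> suppP u \<Longrightarrow> comp v t = 0" using assms unfolding newton_sol_def by auto
  show "supp (fst v) \<subseteq> supp (fst u)"
  proof
    fix i assume "i \<in> supp (fst v)"
    then have "comp v (Inl i) \<noteq> 0" by (simp add: supp_def)
    then have "Inl i \<in> suppP u" using h by blast
    then show "i \<in> supp (fst u)" by (simp add: suppP_def supp_def)
  qed
  show "supp (snd v) \<subseteq> supp (snd u)"
  proof
    fix i assume "i \<in> supp (snd v)"
    then have "comp v (Inr i) \<noteq> 0" by (simp add: supp_def)
    then have "Inr i \<in> suppP u" using h by blast
    then show "i \<in> supp (snd u)" by (simp add: suppP_def supp_def)
  qed
qed

lemma card_suppP: fixes w :: "(real^'p1) \<times> (real^'p2)" shows "card (suppP w) \<le> l0 (fst w) + l0 (snd w)"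
proof -
  have "suppP w \<subseteq> Inl ` supp (fst w) \<union> Inr ` supp (snd w)"
  proof
    fix t assume "t \<in> suppP w" then show "t \<in> Inl ` supp (fst w) \<union> Inr ` supp (snd w)"
      by (cases t) (auto simp: suppP_def supp_def)
  qed
  then have "card (suppP w) \<le> card (Inl ` supp (fst w) \<union> Inr ` supp (snd w))" by (intro card_mono) auto
  also have "\<dots> \<le> card (Inl ` supp (fst w) :: ('p1 + 'p2) set) + card (Inr ` supp (snd w) :: ('p1 + 'p2) set)"
    by (rule card_Un_le)
  also have "\<dots> \<le> l0 (fst w) + l0 (snd w)" unfolding l0_def by (intro add_mono card_image_le) auto
  finally show ?thesis .
qed

lemma newton_sol_iff: fixes X :: "real^'p1^'n" and Z :: "real^'p2^'n" shows
  "newton_sol (fobj L a b c X Z y) u v \<longleftrightarrow> (\<forall>t. t \<notin> suppP u \<longrightarrow> comp v t = 0) \<and>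
     (\<forall>t\<in>suppP u. comp (Hfun L a b c X Z u (v - u)) t = - comp (Gfun L a b c X Z y u) t)"
  unfolding newton_sol_def hessian_eq gradient_eq ..

theorem lemma4p4:
  fixes L :: loss_kind
    and X :: "real^'p1^'n" and Z :: "real^'p2^'n" and y :: "real^'n"
    and a b c \<sigma> \<epsilon> \<alpha>0 \<gamma> :: real and s1 s2 :: nat
    and \<beta> u :: "nat \<Rightarrow> (real^'p1) \<times> (real^'p2)" and q :: "nat \<Rightarrow> nat"
    and P :: "nat \<Rightarrow> real \<Rightarrow> (real^'p1) \<times> (real^'p2)" and v :: "nat \<Rightarrow> (real^'p1) \<times> (real^'p2)"
    and \<beta>s :: "(real^'p1) \<times> (real^'p2)"
  defines "F \<equiv> fobj L a b c X Z y"
  assumes abc: "a > 0" "b > 0" "c > 0"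
    and s1: "1 \<le> s1" "s1 \<le> CARD('p1)"
    and s2: "1 \<le> s2" "s2 \<le> CARD('p2)"
    and ylog: "L = Log \<Longrightarrow> (\<forall>i. y$i = 0 \<or> y$i = 1)"
    and sreg: "s_regular (s1 + s2) (cols X Z)"
    and params: "\<sigma> > 0" "\<epsilon> > 0" "0 < \<alpha>0" "\<alpha>0 \<le> 1" "0 < \<gamma>" "\<gamma> < 1"
    and run: "gpna_run F s1 s2 \<sigma> \<epsilon> \<alpha>0 \<gamma> \<beta> u q P v"
    and lim: "\<beta> \<longlonglongrightarrow> \<beta>s"
  shows "(\<exists>K. \<forall>k\<ge>K.
            (l0 (fst \<beta>s) < s1 \<longrightarrow> supp (fst \<beta>s) \<subseteq> supp (fst (\<beta> k)) \<inter> supp (fst (u k))) \<and>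
            (l0 (fst \<beta>s) = s1 \<longrightarrow> supp (fst \<beta>s) = supp (fst (\<beta> k)) \<and> supp (fst \<beta>s) = supp (fst (u k))) \<and>
            (l0 (snd \<beta>s) < s2 \<longrightarrow> supp (snd \<beta>s) \<subseteq> supp (snd (\<beta> k)) \<inter> supp (snd (u k))) \<and>
            (l0 (snd \<beta>s) = s2 \<longrightarrow> supp (snd \<beta>s) = supp (snd (\<beta> k)) \<and> supp (snd \<beta>s) = supp (snd (u k))))
         \<and> (\<sigma> < l_f L a b c X Z (s1 + s2) / 2 \<longrightarrow>
            (\<exists>K. \<forall>k\<ge>K. switch_cond F \<epsilon> (\<beta> k) (u k) \<and> newton_sol F (u k) (v k)
                 \<and> F (v k) \<le> F (u k) - \<sigma>/2 * (norm (v k - u k))^2 \<and> \<beta> (Suc k) = v k))"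
proof -
  let ?G = "Gfun L a b c X Z y"
  let ?H = "Hfun L a b c X Z"
  have gF: "gradient F = ?G" unfolding F_def by (rule ext, rule gradient_eq)
  have ab: "a \<ge> 0" "b \<ge> 0" "c \<ge> 0" using abc by auto
  define al where "al k = \<alpha>0 * \<gamma> ^ q k" for k
  have alpos: "al k > 0" for k using params by (simp add: al_def)
  have r0: "fst (\<beta> 0) \<in> SparseSet s1" "snd (\<beta> 0) \<in> SparseSet s2"
    using run unfolding gpna_run_def by auto
  have rP: "fst (P k \<alpha>) \<in> proj_sparse s1 (fst (\<beta> k) - \<alpha> *\<^sub>R fst (?G (\<beta> k))) \<and>
            snd (P k \<alpha>) \<in> proj_sparse s2 (snd (\<beta> k) - \<alpha> *\<^sub>R snd (?G (\<beta> k)))" if "\<alpha> > 0" for k \<alpha>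
    using run that unfolding gpna_run_def gF by auto
  have rU: "u k = P k (al k)" for k using run unfolding gpna_run_def al_def by auto
  have rLS: "F (u k) \<le> F (\<beta> k) - \<sigma>/2 * (norm (u k - \<beta> k))^2" for k
    using run unfolding gpna_run_def rU al_def by auto
  have rmin: "\<not> (F (P k (\<alpha>0 * \<gamma> ^ q')) \<le> F (\<beta> k) - \<sigma>/2 * (norm (P k (\<alpha>0 * \<gamma> ^ q') - \<beta> k))^2)"
    if "q' < q k" for k q' using run that unfolding gpna_run_def by auto
  have rN: "if switch_cond F \<epsilon> (\<beta> k) (u k) \<and>
             (\<exists>w. newton_sol F (u k) w \<and> F w \<le> F (u k) - \<sigma>/2 * (norm (w - u k))^2)
          then newton_sol F (u k) (v k) \<and> F (v k) \<le> F (u k) - \<sigma>/2 * (norm (v k - u k))^2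
               \<and> \<beta> (Suc k) = v k
          else \<beta> (Suc k) = u k" for k using run unfolding gpna_run_def by blast
  have pu1: "fst (u k) \<in> proj_sparse s1 (fst (\<beta> k) - al k *\<^sub>R fst (?G (\<beta> k)))" for k
    using rP[OF alpos[of k], of k] rU[of k] by simp
  have pu2: "snd (u k) \<in> proj_sparse s2 (snd (\<beta> k) - al k *\<^sub>R snd (?G (\<beta> k)))" for k
    using rP[OF alpos[of k], of k] rU[of k] by simp
  have lu1: "l0 (fst (u k)) \<le> s1" for k by (rule proj_in[OF pu1])
  have lu2: "l0 (snd (u k)) \<le> s2" for k by (rule proj_in[OF pu2])
  have spb: "fst (\<beta> k) \<in> SparseSet s1 \<and> snd (\<beta> k) \<in> SparseSet s2" for k
  proof (induction k)
    case 0 then show ?case using r0 by simp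
  next
    case (Suc k)
    show ?case
    proof (cases "switch_cond F \<epsilon> (\<beta> k) (u k) \<and>
             (\<exists>w. newton_sol F (u k) w \<and> F w \<le> F (u k) - \<sigma>/2 * (norm (w - u k))^2)")
      case True
      then have ns: "newton_sol F (u k) (v k)" "\<beta> (Suc k) = v k" using rN[of k] by auto
      have "l0 (fst (v k)) \<le> l0 (fst (u k))" "l0 (snd (v k)) \<le> l0 (snd (u k))"
        using newton_supp[OF ns(1)] unfolding l0_def by (auto intro: card_mono)
      then show ?thesis using ns(2) lu1[of k] lu2[of k] unfolding SparseSet_def by auto
    next
      case False
      then have "\<beta> (Suc k) = u k" using rN[of k] by auto
      then show ?thesis using lu1[of k] lu2[of k] unfolding SparseSet_def by auto
    qed
  qed
  have lb1: "l0 (fst (\<beta> k)) \<le> s1" and lb2: "l0 (snd (\<beta> k)) \<le> s2" for k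
    using spb[of k] unfolding SparseSet_def by auto
  have dec: "F (\<beta> (Suc k)) \<le> F (u k)" for k
  proof (cases "switch_cond F \<epsilon> (\<beta> k) (u k) \<and>
             (\<exists>w. newton_sol F (u k) w \<and> F w \<le> F (u k) - \<sigma>/2 * (norm (w - u k))^2)")
    case True
    then have "F (v k) \<le> F (u k) - \<sigma>/2 * (norm (v k - u k))^2" "\<beta> (Suc k) = v k" using rN[of k] by auto
    moreover have "\<sigma>/2 * (norm (v k - u k))^2 \<ge> 0" using params by simp
    ultimately show ?thesis by simp
  next
    case False
    then show ?thesis using rN[of k] by auto
  qed
  have contF: "isCont F x" for x unfolding F_def by (rule has_derivative_continuous[OF fobj_deriv])
  have contG: "isCont ?G x" for x by (rule has_derivative_continuous[OF Gfun_deriv])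
  have Fb: "(\<lambda>k. F (\<beta> k)) \<longlonglongrightarrow> F \<beta>s" by (rule isCont_tendsto_compose[OF contF lim])
  have FbS: "(\<lambda>k. F (\<beta> (Suc k))) \<longlonglongrightarrow> F \<beta>s" using Fb by (rule LIMSEQ_Suc)
  have D0: "(\<lambda>k. sqrt (2/\<sigma> * (F (\<beta> k) - F (\<beta> (Suc k))))) \<longlonglongrightarrow> 0"
    using tendsto_real_sqrt[OF tendsto_mult[OF tendsto_const tendsto_diff[OF Fb FbS]], of "2/\<sigma>"] by simp
  have nub: "norm (u k - \<beta> k) \<le> sqrt (2/\<sigma> * (F (\<beta> k) - F (\<beta> (Suc k))))" for k
  proof -
    have "\<sigma>/2 * (norm (u k - \<beta> k))^2 \<le> F (\<beta> k) - F (\<beta> (Suc k))" using rLS[of k] dec[of k] by simp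
    then have "(norm (u k - \<beta> k))^2 \<le> 2/\<sigma> * (F (\<beta> k) - F (\<beta> (Suc k)))" using params by (simp add: field_simps)
    then have "sqrt ((norm (u k - \<beta> k))^2) \<le> sqrt (2/\<sigma> * (F (\<beta> k) - F (\<beta> (Suc k))))" by (rule real_sqrt_le_mono)
    then show ?thesis by simp
  qed
  have lu0: "(\<lambda>k. u k - \<beta> k) \<longlonglongrightarrow> 0"
    by (rule Lim_null_comparison[OF _ D0]) (use nub in auto)
  have lu: "u \<longlonglongrightarrow> \<beta>s" using tendsto_add[OF lu0 lim] by simp
  have lb1c: "(\<lambda>k. fst (\<beta> k)) \<longlonglongrightarrow> fst \<beta>s" "(\<lambda>k. snd (\<beta> k)) \<longlonglongrightarrow> snd \<beta>s"
    using lim by (auto intro: tendsto_fst tendsto_snd)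
  have lu1c: "(\<lambda>k. fst (u k)) \<longlonglongrightarrow> fst \<beta>s" "(\<lambda>k. snd (u k)) \<longlonglongrightarrow> snd \<beta>s"
    using lu by (auto intro: tendsto_fst tendsto_snd)
  have lbs1: "l0 (fst \<beta>s) \<le> s1" by (rule l0_limit[OF lb1c(1)]) (use lb1 in auto)
  have lbs2: "l0 (snd \<beta>s) \<le> s2" by (rule l0_limit[OF lb1c(2)]) (use lb2 in auto)
  have E1: "eventually (\<lambda>k. (l0 (fst \<beta>s) < s1 \<longrightarrow> supp (fst \<beta>s) \<subseteq> supp (fst (\<beta> k)) \<inter> supp (fst (u k))) \<and>
            (l0 (fst \<beta>s) = s1 \<longrightarrow> supp (fst \<beta>s) = supp (fst (\<beta> k)) \<and> supp (fst \<beta>s) = supp (fst (u k)))) sequentially"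
  proof (cases "l0 (fst \<beta>s) = s1")
    case True
    have "eventually (\<lambda>k. supp (fst \<beta>s) = supp (fst (\<beta> k))) sequentially"
      by (rule supp_eq_ev[OF lb1c(1) _ True]) (use lb1 in auto)
    moreover have "eventually (\<lambda>k. supp (fst \<beta>s) = supp (fst (u k))) sequentially"
      by (rule supp_eq_ev[OF lu1c(1) _ True]) (use lu1 in auto)
    ultimately show ?thesis by eventually_elim (use True in auto)
  next
    case False
    from supp_ev[OF lb1c(1)] supp_ev[OF lu1c(1)] show ?thesis by eventually_elim (use False in auto)
  qed
  have E2: "eventually (\<lambda>k. (l0 (snd \<beta>s) < s2 \<longrightarrow> supp (snd \<beta>s) \<subseteq> supp (snd (\<beta> k)) \<inter> supp (snd (u k))) \<and>
            (l0 (snd \<beta>s) = s2 \<longrightarrow> supp (snd \<beta>s) = supp (snd (\<beta> k)) \<and> supp (snd \<beta>s) = supp (snd (u k)))) sequentially"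
  proof (cases "l0 (snd \<beta>s) = s2")
    case True
    have "eventually (\<lambda>k. supp (snd \<beta>s) = supp (snd (\<beta> k))) sequentially"
      by (rule supp_eq_ev[OF lb1c(2) _ True]) (use lb2 in auto)
    moreover have "eventually (\<lambda>k. supp (snd \<beta>s) = supp (snd (u k))) sequentially"
      by (rule supp_eq_ev[OF lu1c(2) _ True]) (use lu2 in auto)
    ultimately show ?thesis by eventually_elim (use True in auto)
  next
    case False
    from supp_ev[OF lb1c(2)] supp_ev[OF lu1c(2)] show ?thesis by eventually_elim (use False in auto)
  qed
  have part1: "\<exists>K. \<forall>k\<ge>K.
            (l0 (fst \<beta>s) < s1 \<longrightarrow> supp (fst \<beta>s) \<subseteq> supp (fst (\<beta> k)) \<inter> supp (fst (u k))) \<and>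
            (l0 (fst \<beta>s) = s1 \<longrightarrow> supp (fst \<beta>s) = supp (fst (\<beta> k)) \<and> supp (fst \<beta>s) = supp (fst (u k))) \<and>
            (l0 (snd \<beta>s) < s2 \<longrightarrow> supp (snd \<beta>s) \<subseteq> supp (snd (\<beta> k)) \<inter> supp (snd (u k))) \<and>
            (l0 (snd \<beta>s) = s2 \<longrightarrow> supp (snd \<beta>s) = supp (snd (\<beta> k)) \<and> supp (snd \<beta>s) = supp (snd (u k)))"
  proof -
    obtain K where "\<forall>k\<ge>K. (l0 (fst \<beta>s) < s1 \<longrightarrow> supp (fst \<beta>s) \<subseteq> supp (fst (\<beta> k)) \<inter> supp (fst (u k))) \<and>
            (l0 (fst \<beta>s) = s1 \<longrightarrow> supp (fst \<beta>s) = supp (fst (\<beta> k)) \<and> supp (fst \<beta>s) = supp (fst (u k)))"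
      using E1 unfolding eventually_sequentially by blast
    moreover obtain K' where "\<forall>k\<ge>K'. (l0 (snd \<beta>s) < s2 \<longrightarrow> supp (snd \<beta>s) \<subseteq> supp (snd (\<beta> k)) \<inter> supp (snd (u k))) \<and>
            (l0 (snd \<beta>s) = s2 \<longrightarrow> supp (snd \<beta>s) = supp (snd (\<beta> k)) \<and> supp (snd \<beta>s) = supp (snd (u k)))"
      using E2 unfolding eventually_sequentially by blast
    ultimately show ?thesis by (intro exI[of _ "max K K'"]) simp
  qed
  have part2: "\<sigma> < l_f L a b c X Z (s1 + s2) / 2 \<longrightarrow>
            (\<exists>K. \<forall>k\<ge>K. switch_cond F \<epsilon> (\<beta> k) (u k) \<and> newton_sol F (u k) (v k)
                 \<and> F (v k) \<le> F (u k) - \<sigma>/2 * (norm (v k - u k))^2 \<and> \<beta> (Suc k) = v k)"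
  proof
    assume sl: "\<sigma> < l_f L a b c X Z (s1 + s2) / 2"
    let ?l = "l_f L a b c X Z (s1 + s2)"
    have lpos: "?l > 0" and lgt: "?l > \<sigma>" using sl params by auto
    define Lg where "Lg = (a + b + 4*c) * (Kc X Z)^2"
    define ast where "ast = 1 / (Lg + \<sigma>)"
    have Lg0: "Lg \<ge> 0" using ab unfolding Lg_def by simp
    have ast0: "ast > 0" using Lg0 params unfolding ast_def by simp
    define amin where "amin = min \<alpha>0 (\<gamma> * ast)"
    have amin0: "amin > 0" using params ast0 unfolding amin_def by simp
    have alb: "al k \<ge> amin" for k
    proof (cases "q k")
      case 0 then show ?thesis by (simp add: al_def amin_def)
    next
      case (Suc q')
      have qq: "q' < q k" using Suc by simp
      have gt: "\<alpha>0 * \<gamma> ^ q' > ast"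
      proof (rule ccontr)
        assume "\<not> ?thesis"
        then have le: "\<alpha>0 * \<gamma> ^ q' \<le> ast" by simp
        have pos: "\<alpha>0 * \<gamma> ^ q' > 0" using params by simp
        have "F (P k (\<alpha>0 * \<gamma> ^ q')) \<le> F (\<beta> k) - \<sigma>/2 * (norm (P k (\<alpha>0 * \<gamma> ^ q') - \<beta> k))^2"
          unfolding F_def
          apply (rule ls_ok[OF ab params(1)])
          using spb[of k] rP[OF pos, of k] le pos unfolding ast_def Lg_def by auto
        with rmin[OF qq] show False by simp
      qed
      have "\<gamma> * ast < \<gamma> * (\<alpha>0 * \<gamma> ^ q')" by (rule mult_strict_left_mono[OF gt]) (use params in auto)
      also have "\<dots> = al k" by (simp add: al_def Suc)
      finally show ?thesis unfolding amin_def by simp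
    qed
    define gs where "gs = ?G \<beta>s"
    have Gb: "(\<lambda>k. ?G (\<beta> k)) \<longlonglongrightarrow> gs" unfolding gs_def by (rule isCont_tendsto_compose[OF contG lim])
    have Gu: "(\<lambda>k. ?G (u k)) \<longlonglongrightarrow> gs" unfolding gs_def by (rule isCont_tendsto_compose[OF contG lu])
    have st1: "\<forall>i\<in>supp (fst \<beta>s). fst gs $ i = 0" "l0 (fst \<beta>s) < s1 \<Longrightarrow> fst gs = 0"
      using stat_comp[where p="\<lambda>k. fst (u k)" and b="\<lambda>k. fst (\<beta> k)" and g="\<lambda>k. fst (?G (\<beta> k))"
          and al=al and amin=amin and s=s1 and bs="fst \<beta>s" and gs="fst gs",
          OF pu1 alb amin0 lb1c(1) lu1c(1) tendsto_fst[OF Gb]] by auto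
    have st2: "\<forall>i\<in>supp (snd \<beta>s). snd gs $ i = 0" "l0 (snd \<beta>s) < s2 \<Longrightarrow> snd gs = 0"
      using stat_comp[where p="\<lambda>k. snd (u k)" and b="\<lambda>k. snd (\<beta> k)" and g="\<lambda>k. snd (?G (\<beta> k))"
          and al=al and amin=amin and s=s2 and bs="snd \<beta>s" and gs="snd gs",
          OF pu2 alb amin0 lb1c(2) lu1c(2) tendsto_snd[OF Gb]] by auto
    define R where "R k = rs (suppP (u k)) (?G (u k))" for k
    have R1: "(\<lambda>k. fst (R k)) \<longlonglongrightarrow> 0"
    proof (rule vec_tendstoI)
      fix i
      have Ri: "fst (R k) $ i = (if fst (u k) $ i \<noteq> 0 then fst (?G (u k)) $ i else 0)" for k
        unfolding R_def rs_def suppP_def by simp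
      have "(\<lambda>k. fst (R k) $ i) \<longlonglongrightarrow> 0"
      proof (cases "fst gs $ i = 0")
        case True
        have "(\<lambda>k. fst (?G (u k)) $ i) \<longlonglongrightarrow> fst gs $ i" by (intro tendsto_vec_nth tendsto_fst Gu)
        then have t: "(\<lambda>k. \<bar>fst (?G (u k)) $ i\<bar>) \<longlonglongrightarrow> 0" using True tendsto_rabs by fastforce
        show ?thesis by (rule Lim_null_comparison[OF _ t]) (auto simp: Ri intro!: always_eventually)
      next
        case False
        then have eq: "l0 (fst \<beta>s) = s1" using st1(2) lbs1 by fastforce
        have ni: "i \<notin> supp (fst \<beta>s)" using st1(1) False by auto
        have "eventually (\<lambda>k. supp (fst \<beta>s) = supp (fst (u k))) sequentially"
          by (rule supp_eq_ev[OF lu1c(1) _ eq]) (use lu1 in auto)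
        then have "eventually (\<lambda>k. fst (R k) $ i = 0) sequentially"
          by eventually_elim (use ni in \<open>auto simp: Ri supp_def\<close>)
        then show ?thesis by (rule tendsto_eventually)
      qed
      then show "(\<lambda>k. fst (R k) $ i) \<longlonglongrightarrow> 0 $ i" by simp
    qed
    have R2: "(\<lambda>k. snd (R k)) \<longlonglongrightarrow> 0"
    proof (rule vec_tendstoI)
      fix i
      have Ri: "snd (R k) $ i = (if snd (u k) $ i \<noteq> 0 then snd (?G (u k)) $ i else 0)" for k
        unfolding R_def rs_def suppP_def by simp
      have "(\<lambda>k. snd (R k) $ i) \<longlonglongrightarrow> 0"
      proof (cases "snd gs $ i = 0")
        case True
        have "(\<lambda>k. snd (?G (u k)) $ i) \<longlonglongrightarrow> snd gs $ i" by (intro tendsto_vec_nth tendsto_snd Gu)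
        then have t: "(\<lambda>k. \<bar>snd (?G (u k)) $ i\<bar>) \<longlonglongrightarrow> 0" using True tendsto_rabs by fastforce
        show ?thesis by (rule Lim_null_comparison[OF _ t]) (auto simp: Ri intro!: always_eventually)
      next
        case False
        then have eq: "l0 (snd \<beta>s) = s2" using st2(2) lbs2 by fastforce
        have ni: "i \<notin> supp (snd \<beta>s)" using st2(1) False by auto
        have "eventually (\<lambda>k. supp (snd \<beta>s) = supp (snd (u k))) sequentially"
          by (rule supp_eq_ev[OF lu1c(2) _ eq]) (use lu2 in auto)
        then have "eventually (\<lambda>k. snd (R k) $ i = 0) sequentially"
          by eventually_elim (use ni in \<open>auto simp: Ri supp_def\<close>)
        then show ?thesis by (rule tendsto_eventually)
      qed
      then show "(\<lambda>k. snd (R k) $ i) \<longlonglongrightarrow> 0 $ i" by simp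
    qed
    have "(\<lambda>k. (fst (R k), snd (R k))) \<longlonglongrightarrow> (0, 0)" by (rule tendsto_Pair[OF R1 R2])
    then have Rt: "R \<longlonglongrightarrow> 0" by (simp add: zero_prod_def)
    define \<delta> where "\<delta> = ?l * (?l - \<sigma>) / (2 * (Cr a b X Z + 1))"
    have Cnn: "Cr a b X Z \<ge> 0" unfolding Cr_def using ab Kc_pos[of X Z] by simp
    have d0: "\<delta> > 0" unfolding \<delta>_def using lpos lgt Cnn by (intro divide_pos_pos mult_pos_pos) auto
    have evR: "eventually (\<lambda>k. norm (R k) < \<delta>) sequentially"
      using order_tendstoD(2)[OF tendsto_norm_zero[OF Rt] d0] .
    have sw: "eventually (\<lambda>k. switch_cond F \<epsilon> (\<beta> k) (u k)) sequentially"
    proof -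
      have g1: "eventually (\<lambda>k. norm (fst (?G (u k))) < \<epsilon>) sequentially" if "l0 (fst \<beta>s) \<noteq> s1"
      proof -
        have "fst gs = 0" using st1(2) lbs1 that by simp
        then have "(\<lambda>k. norm (fst (?G (u k)))) \<longlonglongrightarrow> 0" using tendsto_norm[OF tendsto_fst[OF Gu]] by simp
        then show ?thesis using order_tendstoD(2) params(2) by blast
      qed
      have g2: "eventually (\<lambda>k. norm (snd (?G (u k))) < \<epsilon>) sequentially" if "l0 (snd \<beta>s) \<noteq> s2"
      proof -
        have "snd gs = 0" using st2(2) lbs2 that by simp
        then have "(\<lambda>k. norm (snd (?G (u k)))) \<longlonglongrightarrow> 0" using tendsto_norm[OF tendsto_snd[OF Gu]] by simp
        then show ?thesis using order_tendstoD(2) params(2) by blast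
      qed
      have e1: "eventually (\<lambda>k. supp (fst (\<beta> k)) = supp (fst (u k))) sequentially" if eq: "l0 (fst \<beta>s) = s1"
      proof -
        have "eventually (\<lambda>k. supp (fst \<beta>s) = supp (fst (\<beta> k))) sequentially"
          by (rule supp_eq_ev[OF lb1c(1) _ eq]) (use lb1 in auto)
        moreover have "eventually (\<lambda>k. supp (fst \<beta>s) = supp (fst (u k))) sequentially"
          by (rule supp_eq_ev[OF lu1c(1) _ eq]) (use lu1 in auto)
        ultimately show ?thesis by eventually_elim auto
      qed
      have e2: "eventually (\<lambda>k. supp (snd (\<beta> k)) = supp (snd (u k))) sequentially" if eq: "l0 (snd \<beta>s) = s2"
      proof -
        have "eventually (\<lambda>k. supp (snd \<beta>s) = supp (snd (\<beta> k))) sequentially"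
          by (rule supp_eq_ev[OF lb1c(2) _ eq]) (use lb2 in auto)
        moreover have "eventually (\<lambda>k. supp (snd \<beta>s) = supp (snd (u k))) sequentially"
          by (rule supp_eq_ev[OF lu1c(2) _ eq]) (use lu2 in auto)
        ultimately show ?thesis by eventually_elim auto
      qed
      show ?thesis
      proof (cases "l0 (fst \<beta>s) = s1"; cases "l0 (snd \<beta>s) = s2")
        assume "l0 (fst \<beta>s) = s1" "l0 (snd \<beta>s) = s2"
        from e1[OF this(1)] e2[OF this(2)] show ?thesis by eventually_elim (auto simp: switch_cond_def gF)
      next
        assume "l0 (fst \<beta>s) = s1" "l0 (snd \<beta>s) \<noteq> s2"
        from e1[OF this(1)] g2[OF this(2)] show ?thesis by eventually_elim (auto simp: switch_cond_def gF)
      next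
        assume "l0 (fst \<beta>s) \<noteq> s1" "l0 (snd \<beta>s) = s2"
        from g1[OF this(1)] e2[OF this(2)] show ?thesis by eventually_elim (auto simp: switch_cond_def gF)
      next
        assume "l0 (fst \<beta>s) \<noteq> s1" "l0 (snd \<beta>s) \<noteq> s2"
        from g1[OF this(1)] g2[OF this(2)] show ?thesis by eventually_elim (auto simp: switch_cond_def gF)
      qed
    qed
    have nw: "eventually (\<lambda>k. \<exists>w. newton_sol F (u k) w \<and> F w \<le> F (u k) - \<sigma>/2 * (norm (w - u k))^2) sequentially"
      using evR
    proof eventually_elim
      case (elim k)
      have cG: "card (suppP (u k)) \<le> s1 + s2" using card_suppP[of "u k"] lu1[of k] lu2[of k] by linarith
      obtain d where d: "\<forall>t. t \<notin> suppP (u k) \<longrightarrow> comp d t = 0"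
          "\<forall>t\<in>suppP (u k). comp (?H (u k) d) t = - comp (?G (u k)) t"
        using newton_exists[where u="u k" and y=y, OF lpos ab(1,2) cG] by blast
      define w where "w = u k + d"
      have uoff: "comp (u k) t = 0" if "t \<notin> suppP (u k)" for t using that unfolding suppP_def by simp
      have ns: "newton_sol F (u k) w" unfolding F_def newton_sol_iff
        using d uoff by (auto simp: w_def comp_add)
      have "F w \<le> F (u k) - \<sigma>/2 * (norm d)^2" unfolding F_def w_def
        by (rule newton_descent[OF lgt params(1) ab cG d(1) d(2)]) (use elim in \<open>simp add: R_def \<delta>_def\<close>)
      then have "F w \<le> F (u k) - \<sigma>/2 * (norm (w - u k))^2" by (simp add: w_def)
      then show ?case using ns by blast
    qed
    have "eventually (\<lambda>k. switch_cond F \<epsilon> (\<beta> k) (u k) \<and> newton_sol F (u k) (v k)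
                 \<and> F (v k) \<le> F (u k) - \<sigma>/2 * (norm (v k - u k))^2 \<and> \<beta> (Suc k) = v k) sequentially"
      using sw nw
    proof eventually_elim
      case (elim k)
      then have c: "switch_cond F \<epsilon> (\<beta> k) (u k) \<and>
             (\<exists>w. newton_sol F (u k) w \<and> F w \<le> F (u k) - \<sigma>/2 * (norm (w - u k))^2)" by blast
      show ?case using rN[of k, unfolded if_P[OF c]] c by blast
    qed
    then show "\<exists>K. \<forall>k\<ge>K. switch_cond F \<epsilon> (\<beta> k) (u k) \<and> newton_sol F (u k) (v k)
                 \<and> F (v k) \<le> F (u k) - \<sigma>/2 * (norm (v k - u k))^2 \<and> \<beta> (Suc k) = v k"
      unfolding eventually_sequentially .
  qed
  show ?thesis using part1 part2 by blast
qed


end
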